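(* Let $r_0\in(1/4,1/2)$ and let $\epsilon>0$ satisfy $r_0<r_0+\epsilon<1/2$. Then there exists a contact form $\beta=h_1(r,\phi)\,dz+h_2(r,\phi)\,d\phi+h_3(r,\phi)\,dr$ on $D_{r_0+\epsilon}\times\mathbb{S}^1$ such that (i) $\beta$ agrees with $dz+r^2d\phi$ on $D_{r_0}\times\mathbb{S}^1$, and (ii) near the boundary of $D_{r_0+\epsilon}\times\mathbb{S}^1$, $\beta$ agrees with $\alpha_0=\cos(2\pi x)\,dz+\sin(2\pi x)\,dy$ expressed in the coordinates $(r,\phi,z)$.
   Context: $T^3=\mathbb{R}^3/\mathbb{Z}^3$ with coordinates $(x,y,z)$ from the cube $[0,1]^3$. $(r,\phi)$ are polar coordinates on $[0,1]^2$ centered at $(1/2,1/2)$, i.e. $x=r\cos\phi+1/2$, $y=r\sin\phi+1/2$; $D_s\subset[0,1]^2$ is the disk of radius $s$ centered at $(1/2,1/2)$, and $D_s\times\mathbb{S}^1\subset T^3$ with $z$ the $\mathbb{S}^1$-coordinate. A 1-form $\beta$ is a contact form if $\beta\wedge d\beta\neq0$ everywhere. *)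

theory Defs
  imports "HOL-Analysis.Analysis"
begin

text \<open>A z-independent 1-form on (region of [0,1]^2) x S^1 is represented by its Cartesian
  coefficient functions (A,B,C) of (x,y):  beta = A dx + B dy + C dz.\<close>

type_synonym form1 = "(real \<times> real \<Rightarrow> real) \<times> (real \<times> real \<Rightarrow> real) \<times> (real \<times> real \<Rightarrow> real)"

definition ctr :: "real \<times> real" where "ctr = (1/2, 1/2)"

definition disk :: "real \<Rightarrow> (real \<times> real) set" where "disk s = ball ctr s"
definition cdisk :: "real \<Rightarrow> (real \<times> real) set" where "cdisk s = cball ctr s"

definition pd :: "bool \<Rightarrow> (real \<times> real \<Rightarrow> real) \<Rightarrow> (real \<times> real \<Rightarrow> real)" where
  "pd b f = (\<lambda>(x, y). if b then deriv (\<lambda>t. f (t, y)) x else deriv (\<lambda>t. f (x, t)) y)"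

text \<open>C-infinity on an open set: all iterated partial derivatives are (Frechet) differentiable.\<close>
definition smooth_on :: "(real \<times> real) set \<Rightarrow> (real \<times> real \<Rightarrow> real) \<Rightarrow> bool" where
  "smooth_on S f \<longleftrightarrow> (\<forall>ds. foldr pd ds f differentiable_on S)"

definition smooth_form_on :: "(real \<times> real) set \<Rightarrow> form1 \<Rightarrow> bool" where
  "smooth_form_on S \<beta> \<longleftrightarrow> (case \<beta> of (A, B, C) \<Rightarrow> smooth_on S A \<and> smooth_on S B \<and> smooth_on S C)"

text \<open>Coefficient of dx/\dy/\dz in beta /\ d beta (z-derivatives vanish):
  beta /\ d beta = (A (C_y - B_z) + B (A_z - C_x) + C (B_x - A_y)) dx/\dy/\dz.\<close>
definition contact_coeff :: "form1 \<Rightarrow> real \<times> real \<Rightarrow> real" where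
  "contact_coeff \<beta> p = (case \<beta> of (A, B, C) \<Rightarrow>
     A p * pd False C p - B p * pd True C p + C p * (pd True B p - pd False A p))"

definition is_contact_on :: "(real \<times> real) set \<Rightarrow> form1 \<Rightarrow> bool" where
  "is_contact_on S \<beta> \<longleftrightarrow> smooth_form_on S \<beta> \<and> (\<forall>p\<in>S. contact_coeff \<beta> p \<noteq> 0)"

definition form_eq_at :: "form1 \<Rightarrow> form1 \<Rightarrow> real \<times> real \<Rightarrow> bool" where
  "form_eq_at \<beta> \<gamma> p \<longleftrightarrow> (case \<beta> of (A, B, C) \<Rightarrow> case \<gamma> of (A', B', C') \<Rightarrow>
      A p = A' p \<and> B p = B' p \<and> C p = C' p)"

text \<open>d phi and d r in Cartesian coordinates (away from the centre):
  d phi = (-(y-1/2) dx + (x-1/2) dy)/r^2,  d r = ((x-1/2) dx + (y-1/2) dy)/r.\<close>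
definition polar_form :: "(real \<Rightarrow> real \<Rightarrow> real) \<Rightarrow> (real \<Rightarrow> real \<Rightarrow> real) \<Rightarrow> (real \<Rightarrow> real \<Rightarrow> real) \<Rightarrow> form1" where
  "polar_form h1 h2 h3 =
    (\<lambda>(x, y). let r = dist (x, y) ctr; \<phi> = Arg (Complex (x - 1/2) (y - 1/2)) in
       h2 r \<phi> * (-(y - 1/2)) / r\<^sup>2 + h3 r \<phi> * (x - 1/2) / r,
     \<lambda>(x, y). let r = dist (x, y) ctr; \<phi> = Arg (Complex (x - 1/2) (y - 1/2)) in
       h2 r \<phi> * (x - 1/2) / r\<^sup>2 + h3 r \<phi> * (y - 1/2) / r,
     \<lambda>(x, y). let r = dist (x, y) ctr; \<phi> = Arg (Complex (x - 1/2) (y - 1/2)) in h1 r \<phi>)"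

text \<open>dz + r^2 d phi = -(y-1/2) dx + (x-1/2) dy + dz (smooth everywhere).\<close>
definition std_form :: form1 where
  "std_form = (\<lambda>(x, y). -(y - 1/2), \<lambda>(x, y). x - 1/2, \<lambda>_. 1)"

definition alpha0 :: form1 where
  "alpha0 = (\<lambda>_. 0, \<lambda>(x, y). sin (2 * pi * x), \<lambda>(x, y). cos (2 * pi * x))"

end

theory Submission
  imports Defs "HOL-Computational_Algebra.Polynomial"
begin

definition psi :: "real poly \<Rightarrow> real \<Rightarrow> real" where
  "psi q t = (if t > 0 then poly q (1/t) * exp (-(1/t)) else 0)"

definition Tr :: "real poly \<Rightarrow> real poly" where
  "Tr q = [:0,0,1:] * (q - pderiv q)"

lemma poly_div_exp_0: "((\<lambda>z. poly P z / exp z) \<longlongrightarrow> (0::real)) at_top"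
proof -
  have "((\<lambda>z. \<Sum>i\<le>degree P. coeff P i * (z ^ i / exp z)) \<longlongrightarrow> (\<Sum>i\<le>degree P. coeff P i * 0)) at_top"
    by (intro tendsto_sum tendsto_mult tendsto_const tendsto_power_div_exp_0)
  then show ?thesis
    by (simp add: poly_altdef sum_divide_distrib)
qed

lemma psi_deriv0: "(psi q has_real_derivative 0) (at 0)"
proof -
  have L: "((\<lambda>y. (psi q y - psi q 0) / (y - 0)) \<longlongrightarrow> 0) (at_left 0)"
  proof -
    have "eventually (\<lambda>y. 0 = (psi q y - psi q 0) / (y - 0)) (at_left (0::real))"
      using eventually_at_left_real[of "-1" 0, simplified] by eventually_elim (auto simp: psi_def)
    then show ?thesis by (rule Lim_transform_eventually[OF tendsto_const])
  qed
  have R: "((\<lambda>y. (psi q y - psi q 0) / (y - 0)) \<longlongrightarrow> 0) (at_right 0)"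
    unfolding filterlim_at_right_to_top
  proof -
    have "((\<lambda>z. poly (pCons 0 q) z / exp z) \<longlongrightarrow> 0) at_top" by (rule poly_div_exp_0)
    moreover have "eventually (\<lambda>z. poly (pCons 0 q) z / exp z = (psi q (inverse z) - psi q 0) / (inverse z - 0)) at_top"
      using eventually_gt_at_top[of 0]
      by eventually_elim (simp add: psi_def field_simps exp_minus)
    ultimately show "((\<lambda>z. (psi q (inverse z) - psi q 0) / (inverse z - 0)) \<longlongrightarrow> 0) at_top"
      by (rule Lim_transform_eventually)
  qed
  show ?thesis
    unfolding has_field_derivative_iff filterlim_at_split using L R by simp
qed

lemma psi_deriv: "(psi q has_real_derivative psi (Tr q) t) (at t)"
proof (cases "t > 0")
  case True
  have "((\<lambda>s. poly q (1/s) * exp (-(1/s))) has_real_derivative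
     (poly (pderiv q) (1/t) * (-(1/t^2)) * exp (-(1/t)) + poly q (1/t) * (exp (-(1/t)) * (1/t^2)))) (at t)"
    using True
    by (auto intro!: derivative_eq_intros simp: power2_eq_square field_simps)
  moreover have "poly (pderiv q) (1/t) * (-(1/t^2)) * exp (-(1/t)) + poly q (1/t) * (exp (-(1/t)) * (1/t^2))
      = psi (Tr q) t"
    using True by (simp add: psi_def Tr_def algebra_simps power2_eq_square)
  ultimately have "((\<lambda>s. poly q (1/s) * exp (-(1/s))) has_real_derivative psi (Tr q) t) (at t)" by simp
  then show ?thesis
    by (rule has_field_derivative_transform_within_open[where S="{0<..}"]) (use True in \<open>auto simp: psi_def\<close>)
next
  case False
  show ?thesis
  proof (cases "t = 0")
    case True
    then show ?thesis using psi_deriv0[of q] by (simp add: psi_def)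
  next
    case False
    with \<open>\<not> t > 0\<close> have "t < 0" by simp
    have "((\<lambda>s. 0) has_real_derivative 0) (at t)" by simp
    then have "(psi q has_real_derivative 0) (at t)"
      by (rule has_field_derivative_transform_within_open[where S="{..<0}"]) (use \<open>t<0\<close> in \<open>auto simp: psi_def\<close>)
    then show ?thesis using \<open>t<0\<close> by (simp add: psi_def)
  qed
qed

lemma psi_nonneg_1: "psi 1 t \<ge> 0" "psi (Tr 1) t \<ge> 0"
  by (auto simp: psi_def Tr_def)

lemma psi_pos_1: "t > 0 \<Longrightarrow> psi 1 t > 0"
  by (auto simp: psi_def)

definition den :: "real \<Rightarrow> real" where "den t = psi 1 t + psi 1 (1 - t)"
definition W :: "real \<Rightarrow> real" where "W t = psi 1 t / den t"
definition W1 :: "real \<Rightarrow> real" where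
  "W1 t = (psi (Tr 1) t * psi 1 (1 - t) + psi 1 t * psi (Tr 1) (1 - t)) / (den t)^2"
definition W2 :: "real \<Rightarrow> real" where "W2 t = deriv W1 t"

lemma den_pos: "den t > 0"
proof (cases "t > 0")
  case True then show ?thesis using psi_pos_1[of t] psi_nonneg_1(1)[of "1-t"] by (simp add: den_def)
next
  case False then show ?thesis using psi_pos_1[of "1-t"] psi_nonneg_1(1)[of t] by (simp add: den_def)
qed

lemma psi_le0: "t \<le> 0 \<Longrightarrow> psi q t = 0" by (simp add: psi_def)

lemma W_0: "t \<le> 0 \<Longrightarrow> W t = 0" by (simp add: W_def psi_le0)
lemma W_1: "t \<ge> 1 \<Longrightarrow> W t = 1"
  using den_pos[of t] by (simp add: W_def den_def psi_le0)
lemma W1_0: "t \<le> 0 \<Longrightarrow> W1 t = 0" by (simp add: W1_def psi_le0)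
lemma W1_1: "t \<ge> 1 \<Longrightarrow> W1 t = 0" by (simp add: W1_def psi_le0)
lemma W_ge0: "W t \<ge> 0" using den_pos[of t] psi_nonneg_1 by (simp add: W_def)
lemma W_le1: "W t \<le> 1" using den_pos[of t] psi_nonneg_1[of "1-t"] by (simp add: W_def den_def)
lemma W1_ge0: "W1 t \<ge> 0" using psi_nonneg_1[of t] psi_nonneg_1[of "1-t"] by (simp add: W1_def)

lemma psi_chain: "(f has_real_derivative f') (at x) \<Longrightarrow>
  ((\<lambda>x. psi q (f x)) has_real_derivative psi (Tr q) (f x) * f') (at x)"
  by (rule DERIV_chain2[OF psi_deriv])

lemma W_deriv: "(W has_real_derivative W1 t) (at t)"
proof -
  have "(W has_real_derivative
     (psi (Tr 1) t * den t - psi 1 t * (psi (Tr 1) t + psi (Tr 1) (1 - t) * (-1))) / (den t * den t)) (at t)"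
    unfolding W_def den_def using den_pos[of t]
    by (auto intro!: derivative_eq_intros psi_chain psi_deriv simp: den_def)
  moreover have "(psi (Tr 1) t * den t - psi 1 t * (psi (Tr 1) t + psi (Tr 1) (1 - t) * (-1))) / (den t * den t) = W1 t"
    by (simp add: W1_def den_def power2_eq_square algebra_simps)
  ultimately show ?thesis by simp
qed

lemma W1_differentiable: "W1 field_differentiable (at t)"
proof -
  have "\<exists>D. (W1 has_real_derivative D) (at t)"
    unfolding W1_def using den_pos[of t]
    by (intro exI) (rule derivative_eq_intros psi_chain psi_deriv refl | simp add: den_def)+
  then show ?thesis by (auto simp: field_differentiable_def)
qed

lemma W1_deriv: "(W1 has_real_derivative W2 t) (at t)"
  unfolding W2_def using W1_differentiable DERIV_deriv_iff_field_differentiable by blast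

lemma W_chain: "(f has_real_derivative f') (at x) \<Longrightarrow>
  ((\<lambda>x. W (f x)) has_real_derivative W1 (f x) * f') (at x)"
  by (rule DERIV_chain2[OF W_deriv])
lemma W1_chain: "(f has_real_derivative f') (at x) \<Longrightarrow>
  ((\<lambda>x. W1 (f x)) has_real_derivative W2 (f x) * f') (at x)"
  by (rule DERIV_chain2[OF W1_deriv])

inductive_set sm :: "(real \<times> real) set \<Rightarrow> (real \<times> real \<Rightarrow> real) set" for U where
  const: "(\<lambda>p. c) \<in> sm U"
| fstI: "(\<lambda>p. fst p) \<in> sm U"
| sndI: "(\<lambda>p. snd p) \<in> sm U"
| add: "f \<in> sm U \<Longrightarrow> g \<in> sm U \<Longrightarrow> (\<lambda>p. f p + g p) \<in> sm U"
| mult: "f \<in> sm U \<Longrightarrow> g \<in> sm U \<Longrightarrow> (\<lambda>p. f p * g p) \<in> sm U"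
| sinI: "f \<in> sm U \<Longrightarrow> (\<lambda>p. sin (f p)) \<in> sm U"
| cosI: "f \<in> sm U \<Longrightarrow> (\<lambda>p. cos (f p)) \<in> sm U"
| psiI: "f \<in> sm U \<Longrightarrow> (\<lambda>p. psi q (f p)) \<in> sm U"
| invI: "f \<in> sm U \<Longrightarrow> (\<forall>p\<in>U. f p \<noteq> 0) \<Longrightarrow> (\<lambda>p. inverse (f p)) \<in> sm U"
| cong: "f \<in> sm U \<Longrightarrow> (\<forall>p\<in>U. f p = g p) \<Longrightarrow> g \<in> sm U"

lemmas sm_basic = sm.const sm.fstI sm.sndI sm.add sm.mult sm.sinI sm.cosI sm.psiI

lemma sm_minus: "f \<in> sm U \<Longrightarrow> (\<lambda>p. - f p) \<in> sm U"
  using sm.mult[OF sm.const[where c="-1"], of f] by simp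
lemma sm_diff: "f \<in> sm U \<Longrightarrow> g \<in> sm U \<Longrightarrow> (\<lambda>p. f p - g p) \<in> sm U"
  using sm.add[OF _ sm_minus, of f U g] by simp
lemma sm_divide: "f \<in> sm U \<Longrightarrow> g \<in> sm U \<Longrightarrow> (\<forall>p\<in>U. g p \<noteq> 0) \<Longrightarrow> (\<lambda>p. f p / g p) \<in> sm U"
  using sm.mult[OF _ sm.invI, of f U g] by (simp add: divide_inverse)
lemma sm_power: "f \<in> sm U \<Longrightarrow> (\<lambda>p. f p ^ n) \<in> sm U"
  by (induction n) (auto intro: sm_basic)
lemma den_ne: "psi 1 t + psi 1 (1 - t) \<noteq> 0"
  using den_pos[of t] by (simp add: den_def)

lemma sm_W: "f \<in> sm U \<Longrightarrow> (\<lambda>p. W (f p)) \<in> sm U"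
  unfolding W_def den_def using den_pos
  by (auto intro!: sm_divide sm_basic sm_diff simp: den_def den_ne)
lemma sm_W1: "f \<in> sm U \<Longrightarrow> (\<lambda>p. W1 (f p)) \<in> sm U"
  unfolding W1_def using den_pos
  by (auto intro!: sm_divide sm_basic sm_diff sm_power simp: den_def den_ne)

lemmas sm_intros = sm.const sm.fstI sm.sndI sm.add sm.mult sm.sinI sm.cosI sm_minus sm_diff sm_power sm_W sm_W1

definition lin :: "real \<Rightarrow> real \<Rightarrow> real \<times> real \<Rightarrow> real" where
  "lin a b = (\<lambda>h. a * fst h + b * snd h)"

lemma lin_comp: "(f has_derivative lin a b) (at p) \<Longrightarrow> DERIV g (f p) :> D \<Longrightarrow>
   ((\<lambda>x. g (f x)) has_derivative lin (a * D) (b * D)) (at p)"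
  by (rule has_derivative_eq_rhs[OF DERIV_compose_FDERIV]) (auto simp: lin_def algebra_simps)

lemma lin_add: assumes "(f has_derivative lin a b) (at p)" "(g has_derivative lin c d) (at p)" shows
   "((\<lambda>x. f x + g x) has_derivative lin (a + c) (b + d)) (at p)"
  by (rule has_derivative_eq_rhs[OF has_derivative_add[OF assms]]) (auto simp: lin_def algebra_simps)

lemma lin_mult: assumes "(f has_derivative lin a b) (at p)" "(g has_derivative lin c d) (at p)" shows
   "((\<lambda>x. f x * g x) has_derivative lin (f p * c + a * g p) (f p * d + b * g p)) (at p)"
  by (rule has_derivative_eq_rhs[OF has_derivative_mult[OF assms]]) (auto simp: lin_def algebra_simps)

lemma lin_fst: "(fst has_derivative lin 1 0) (at p)"
  by (rule has_derivative_eq_rhs[OF has_derivative_fst[OF has_derivative_ident]]) (auto simp: lin_def)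
lemma lin_snd: "(snd has_derivative lin 0 1) (at p)"
  by (rule has_derivative_eq_rhs[OF has_derivative_snd[OF has_derivative_ident]]) (auto simp: lin_def)
lemma lin_const: "((\<lambda>x. c) has_derivative lin 0 0) (at p)"
  by (rule has_derivative_eq_rhs[OF has_derivative_const]) (auto simp: lin_def)

lemma sm_deriv:
  assumes "f \<in> sm U" "open U"
  shows "\<exists>fx\<in>sm U. \<exists>fy\<in>sm U. \<forall>p\<in>U. (f has_derivative lin (fx p) (fy p)) (at p)"
  using assms
proof (induction rule: sm.induct)
  case (const c)
  show ?case using lin_const by (intro bexI[OF _ sm.const] ballI) auto
next
  case fstI
  show ?case using lin_fst by (intro bexI[OF _ sm.const] ballI) auto
next
  case sndI
  show ?case using lin_snd by (intro bexI[OF _ sm.const] ballI) auto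
next
  case (add f g)
  then obtain fx fy gx gy where f: "fx \<in> sm U" "fy \<in> sm U" "\<forall>p\<in>U. (f has_derivative lin (fx p) (fy p)) (at p)"
    and g: "gx \<in> sm U" "gy \<in> sm U" "\<forall>p\<in>U. (g has_derivative lin (gx p) (gy p)) (at p)" by blast
  show ?case
    using f g by (intro bexI[OF _ sm.add[OF f(1) g(1)]] bexI[OF _ sm.add[OF f(2) g(2)]] ballI lin_add) auto
next
  case (mult f g)
  then obtain fx fy gx gy where f: "fx \<in> sm U" "fy \<in> sm U" "\<forall>p\<in>U. (f has_derivative lin (fx p) (fy p)) (at p)"
    and g: "gx \<in> sm U" "gy \<in> sm U" "\<forall>p\<in>U. (g has_derivative lin (gx p) (gy p)) (at p)" by blast
  show ?case
    using f g mult.hyps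
    by (intro bexI[of _ "\<lambda>p. f p * gx p + fx p * g p"] bexI[of _ "\<lambda>p. f p * gy p + fy p * g p"]
        ballI lin_mult sm.add sm.mult) auto
next
  case (sinI f)
  then obtain fx fy where f: "fx \<in> sm U" "fy \<in> sm U" "\<forall>p\<in>U. (f has_derivative lin (fx p) (fy p)) (at p)" by blast
  show ?case
    using f sinI.hyps
    by (intro bexI[of _ "\<lambda>p. fx p * cos (f p)"] bexI[of _ "\<lambda>p. fy p * cos (f p)"]
        ballI lin_comp DERIV_sin sm.mult sm.cosI) auto
next
  case (cosI f)
  then obtain fx fy where f: "fx \<in> sm U" "fy \<in> sm U" "\<forall>p\<in>U. (f has_derivative lin (fx p) (fy p)) (at p)" by blast
  show ?case
    using f cosI.hyps
    by (intro bexI[of _ "\<lambda>p. fx p * - sin (f p)"] bexI[of _ "\<lambda>p. fy p * - sin (f p)"]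
        ballI lin_comp DERIV_cos sm.mult sm_minus sm.sinI) auto
next
  case (psiI f q)
  then obtain fx fy where f: "fx \<in> sm U" "fy \<in> sm U" "\<forall>p\<in>U. (f has_derivative lin (fx p) (fy p)) (at p)" by blast
  show ?case
    using f psiI.hyps
    by (intro bexI[of _ "\<lambda>p. fx p * psi (Tr q) (f p)"] bexI[of _ "\<lambda>p. fy p * psi (Tr q) (f p)"]
        ballI lin_comp psi_deriv sm.mult sm.psiI) auto
next
  case (invI f)
  then obtain fx fy where f: "fx \<in> sm U" "fy \<in> sm U" "\<forall>p\<in>U. (f has_derivative lin (fx p) (fy p)) (at p)" by blast
  have iv: "(\<lambda>p. inverse (f p)) \<in> sm U" using invI.hyps by (intro sm.invI)
  have d: "DERIV inverse (f p) :> - (inverse (f p) * inverse (f p))" if "p \<in> U" for p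
    using invI.hyps that DERIV_inverse[of "f p"] by (simp add: power2_eq_square)
  show ?case
    using f iv d
    by (intro bexI[of _ "\<lambda>p. fx p * - (inverse (f p) * inverse (f p))"]
         bexI[of _ "\<lambda>p. fy p * - (inverse (f p) * inverse (f p))"]
        ballI lin_comp sm.mult sm_minus) auto
next
  case (cong f g)
  then obtain fx fy where f: "fx \<in> sm U" "fy \<in> sm U" "\<forall>p\<in>U. (f has_derivative lin (fx p) (fy p)) (at p)" by blast
  show ?case
    apply (rule bexI[OF _ f(1)], rule bexI[OF _ f(2)])
    using f cong by (auto intro: has_derivative_transform_within_open)
qed

lemma pd_local:
  assumes "open V" "p \<in> V" "\<And>q. q \<in> V \<Longrightarrow> f q = g q"
  shows "pd b f p = pd b g p"
proof -
  obtain x y where p: "p = (x, y)" by (cases p)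
  have o1: "open {t. (t, y) \<in> V}"
    using continuous_open_vimage[OF assms(1), of "\<lambda>t. (t, y)"] by (simp add: vimage_def)
  have o2: "open {t. (x, t) \<in> V}"
    using continuous_open_vimage[OF assms(1), of "\<lambda>t. (x, t)"] by (simp add: vimage_def)
  have e1: "eventually (\<lambda>t. f (t, y) = g (t, y)) (nhds x)"
    using o1 assms by (auto simp: eventually_nhds p intro!: exI[of _ "{t. (t, y) \<in> V}"])
  have e2: "eventually (\<lambda>t. f (x, t) = g (x, t)) (nhds y)"
    using o2 assms by (auto simp: eventually_nhds p intro!: exI[of _ "{t. (x, t) \<in> V}"])
  show ?thesis
    using deriv_cong_ev[OF e1 refl] deriv_cong_ev[OF e2 refl] by (simp add: pd_def p)
qed

lemma pd_lin:
  assumes "(g has_derivative lin a b) (at (x, y))"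
  shows "pd True g (x, y) = a" "pd False g (x, y) = b"
proof -
  have d1: "((\<lambda>t. (t, y)) has_derivative (\<lambda>t. (t, 0))) (at x)"
    by (auto intro!: derivative_eq_intros)
  have "((\<lambda>t. g (t, y)) has_derivative (\<lambda>t. lin a b (t, 0))) (at x)"
    using has_derivative_compose[OF d1, of g "lin a b"] assms by simp
  then have "((\<lambda>t. g (t, y)) has_real_derivative a) (at x)"
    by (simp add: has_field_derivative_def lin_def mult.commute[of _ a] mult.commute[of _ b])
  then show "pd True g (x, y) = a" by (simp add: pd_def DERIV_imp_deriv)
  have d2: "((\<lambda>t. (x, t)) has_derivative (\<lambda>t. (0, t))) (at y)"
    by (auto intro!: derivative_eq_intros)
  have "((\<lambda>t. g (x, t)) has_derivative (\<lambda>t. lin a b (0, t))) (at y)"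
    using has_derivative_compose[OF d2, of g "lin a b"] assms by simp
  then have "((\<lambda>t. g (x, t)) has_real_derivative b) (at y)"
    by (simp add: has_field_derivative_def lin_def mult.commute[of _ a] mult.commute[of _ b])
  then show "pd False g (x, y) = b" by (simp add: pd_def DERIV_imp_deriv)
qed

lemma sm_pd:
  assumes "f \<in> sm U" "open U"
  shows "\<exists>g\<in>sm U. \<forall>p\<in>U. pd b f p = g p"
proof -
  obtain fx fy where f: "fx \<in> sm U" "fy \<in> sm U" "\<forall>p\<in>U. (f has_derivative lin (fx p) (fy p)) (at p)"
    using sm_deriv[OF assms] by blast
  have "\<forall>p\<in>U. pd b f p = (if b then fx p else fy p)"
  proof
    fix p assume "p \<in> U"
    obtain x y where p: "p = (x, y)" by (cases p)
    have "(f has_derivative lin (fx (x,y)) (fy (x,y))) (at (x,y))" using f(3) \<open>p \<in> U\<close> p by auto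
    from pd_lin[OF this] show "pd b f p = (if b then fx p else fy p)" using p by (cases b) auto
  qed
  moreover have "(\<lambda>p. if b then fx p else fy p) \<in> sm U" using f by (cases b) auto
  ultimately show ?thesis by (intro bexI[of _ "\<lambda>p. if b then fx p else fy p"]) auto
qed

lemma sm_differentiable: "f \<in> sm U \<Longrightarrow> open U \<Longrightarrow> f differentiable_on U"
proof -
  assume a: "f \<in> sm U" "open U"
  obtain fx fy where f: "\<forall>p\<in>U. (f has_derivative lin (fx p) (fy p)) (at p)"
    using sm_deriv[OF a] by blast
  show ?thesis unfolding differentiable_on_def differentiable_def
    using f has_derivative_at_withinI by blast
qed

lemma sm_smooth:
  assumes "f \<in> sm U" "open U"
  shows "smooth_on U f"
proof -
  have "\<exists>g\<in>sm U. \<forall>p\<in>U. foldr pd ds f p = g p" for ds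
  proof (induction ds)
    case Nil then show ?case using assms by auto
  next
    case (Cons b ds)
    then obtain g where g: "g \<in> sm U" "\<forall>p\<in>U. foldr pd ds f p = g p" by blast
    obtain h where h: "h \<in> sm U" "\<forall>p\<in>U. pd b g p = h p" using sm_pd[OF g(1) assms(2)] by blast
    have "\<forall>p\<in>U. pd b (foldr pd ds f) p = h p"
    proof
      fix p assume p: "p \<in> U"
      have "pd b (foldr pd ds f) p = pd b g p"
        by (rule pd_local[OF assms(2) p]) (use g(2) in blast)
      then show "pd b (foldr pd ds f) p = h p" using h(2) p by simp
    qed
    then show ?case using h(1) by (intro bexI[of _ h]) simp_all
  qed
  then show ?thesis unfolding smooth_on_def
  proof (intro allI)
    fix ds
    assume "\<And>ds. \<exists>g\<in>sm U. \<forall>p\<in>U. foldr pd ds f p = g p"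
    then obtain g where g: "g \<in> sm U" "\<forall>p\<in>U. foldr pd ds f p = g p" by blast
    have "foldr pd ds f \<in> sm U" by (rule sm.cong[OF g(1)]) (use g(2) in auto)
    then show "foldr pd ds f differentiable_on U" using sm_differentiable assms(2) by blast
  qed
qed

lemma smooth_local:
  assumes "open U" "\<And>p. p \<in> U \<Longrightarrow> \<exists>V. open V \<and> p \<in> V \<and> f \<in> sm V"
  shows "smooth_on U f"
  unfolding smooth_on_def differentiable_on_def
proof (intro allI ballI)
  fix ds p assume p: "p \<in> U"
  obtain V where V: "open V" "p \<in> V" "f \<in> sm V" using assms(2)[OF p] by blast
  have "smooth_on V f" by (rule sm_smooth[OF V(3,1)])
  then have "foldr pd ds f differentiable_on V" unfolding smooth_on_def by blast
  then have "foldr pd ds f differentiable (at p within V)"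
    using V(2) unfolding differentiable_on_def by blast
  then have "foldr pd ds f differentiable (at p)"
    using at_within_open[OF V(2,1)] by simp
  then show "foldr pd ds f differentiable (at p within U)"
    by (rule differentiable_at_withinI)
qed

definition cutf :: "real \<Rightarrow> real \<Rightarrow> real \<Rightarrow> real" where
  "cutf a b r = W ((r - a^2) / (b^2 - a^2))"
definition cutd :: "real \<Rightarrow> real \<Rightarrow> real \<Rightarrow> real" where
  "cutd a b r = W1 ((r - a^2) / (b^2 - a^2)) / (b^2 - a^2)"
definition cutdd :: "real \<Rightarrow> real \<Rightarrow> real \<Rightarrow> real" where
  "cutdd a b r = W2 ((r - a^2) / (b^2 - a^2)) / (b^2 - a^2)^2"

lemma cutf_chain: "b^2 \<noteq> a^2 \<Longrightarrow> (f has_real_derivative f') (at x) \<Longrightarrow>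
  ((\<lambda>t. cutf a b (f t)) has_real_derivative cutd a b (f x) * f') (at x)"
  unfolding cutf_def cutd_def
  by (rule DERIV_cong[OF W_chain]) (auto intro!: derivative_eq_intros)

lemma cutd_chain: "b^2 \<noteq> a^2 \<Longrightarrow> (f has_real_derivative f') (at x) \<Longrightarrow>
  ((\<lambda>t. cutd a b (f t)) has_real_derivative cutdd a b (f x) * f') (at x)"
  unfolding cutdd_def cutd_def
  by (rule DERIV_cong[OF DERIV_cdivide[OF W1_chain]]) (auto intro!: derivative_eq_intros simp: power2_eq_square)

lemma cutf_0: "a < b \<Longrightarrow> 0 \<le> a \<Longrightarrow> r \<le> a^2 \<Longrightarrow> cutf a b r = 0"
  unfolding cutf_def by (rule W_0) (simp add: divide_nonpos_pos power_strict_mono)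
lemma cutf_1: "a < b \<Longrightarrow> 0 \<le> a \<Longrightarrow> r \<ge> b^2 \<Longrightarrow> cutf a b r = 1"
  unfolding cutf_def using power_strict_mono[of a b 2] by (intro W_1) simp
lemma cutd_0: "a < b \<Longrightarrow> 0 \<le> a \<Longrightarrow> r \<le> a^2 \<Longrightarrow> cutd a b r = 0"
  unfolding cutd_def by (subst W1_0) (simp_all add: divide_nonpos_pos power_strict_mono)
lemma cutd_1: "a < b \<Longrightarrow> 0 \<le> a \<Longrightarrow> r \<ge> b^2 \<Longrightarrow> cutd a b r = 0"
  unfolding cutd_def using power_strict_mono[of a b 2] by (subst W1_1) simp_all
lemma cutf_ge0: "cutf a b r \<ge> 0" by (simp add: cutf_def W_ge0)
lemma cutf_le1: "cutf a b r \<le> 1" by (simp add: cutf_def W_le1)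
lemma cutd_ge0: "a < b \<Longrightarrow> 0 \<le> a \<Longrightarrow> cutd a b r \<ge> 0"
  unfolding cutd_def using power_strict_mono[of a b 2] W1_ge0 by simp

lemma sm_cutf: "f \<in> sm U \<Longrightarrow> (\<lambda>p. cutf a b (f p)) \<in> sm U"
  unfolding cutf_def by (simp add: divide_inverse) (intro sm_W sm.mult sm_diff sm.const)
lemma sm_cutd: "f \<in> sm U \<Longrightarrow> (\<lambda>p. cutd a b (f p)) \<in> sm U"
  unfolding cutd_def by (simp add: divide_inverse) (intro sm_W1 sm.mult sm_diff sm.const)

definition th :: "real \<Rightarrow> real" where "th g = 2 * pi * (g + 1/2)"
definition rho :: "real \<Rightarrow> real \<Rightarrow> real" where "rho x y = (x - 1/2)^2 + (y - 1/2)^2"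

lemma rho_dx: "((\<lambda>t. rho t y) has_real_derivative 2 * (x - 1/2)) (at x)"
  unfolding rho_def by (auto intro!: derivative_eq_intros)
lemma rho_dy: "((\<lambda>t. rho x t) has_real_derivative 2 * (y - 1/2)) (at y)"
  unfolding rho_def by (auto intro!: derivative_eq_intros)

locale L =
  fixes r0 \<epsilon> :: real
  assumes r0_gt: "1/4 < r0" and eps_pos: "0 < \<epsilon>" and R_lt: "r0 + \<epsilon> < 1/2"
begin

definition "e = \<epsilon> / 10"
definition "a k = r0 + k * e"
definition "dl = (r0 - 1/4) / 2"
definition "KK = (64::real)"
definition "rp = (1/4 + dl / KK) / (1 - dl)"
definition "h u = - rp + dl * (u / KK + rp)"
definition "b1 u = dl * sin (th (h u)) / cos (th (h u))"
definition "cc = b1 0"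

definition "Dd r = 1 - cutf r0 (a 1) r"
definition "Dd1 r = - cutd r0 (a 1) r"
definition "Dd2 r = - cutdd r0 (a 1) r"

definition "A1 = (\<lambda>(x, y). - (2 * (x - 1/2) * (y - 1/2) * ((x - 1/2) + cc) * Dd1 (rho x y) + Dd (rho x y) * (y - 1/2)))"
definition "B1 = (\<lambda>(x, y). 2 * (x - 1/2) + cc - (2 * (y - 1/2) * (y - 1/2) * ((x - 1/2) + cc) * Dd1 (rho x y)
               + Dd (rho x y) * ((x - 1/2) + cc)))"
definition "C1 = (\<lambda>(x::real, y::real). 1::real)"

lemma a_mono: "k < l \<Longrightarrow> a k < a l"
  using eps_pos by (simp add: a_def e_def)
lemma a_pos: "0 \<le> k \<Longrightarrow> 0 < a k"
proof -
  assume k: "0 \<le> k"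
  have "0 \<le> k * (\<epsilon> / 10)" using k eps_pos by simp
  then show ?thesis using r0_gt by (simp add: a_def e_def)
qed
lemma a0: "a 0 = r0" by (simp add: a_def)
lemma a_sq_ne: "k < l \<Longrightarrow> 0 \<le> k \<Longrightarrow> (a l)^2 \<noteq> (a k)^2"
  using a_mono[of k l] a_pos[of k] by (metis less_le_not_le order_less_le pos2 power_strict_mono)
lemma r0a1: "(a 1)^2 \<noteq> r0^2" using a_sq_ne[of 0 1] by (simp add: a0)

lemma Dd_chain: "(f has_real_derivative f') (at x) \<Longrightarrow> ((\<lambda>t. Dd (f t)) has_real_derivative Dd1 (f x) * f') (at x)"
  unfolding Dd_def Dd1_def using cutf_chain[OF r0a1] by (auto intro!: derivative_eq_intros)
lemma Dd1_chain: "(f has_real_derivative f') (at x) \<Longrightarrow> ((\<lambda>t. Dd1 (f t)) has_real_derivative Dd2 (f x) * f') (at x)"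
  unfolding Dd1_def Dd2_def using cutd_chain[OF r0a1] by (auto intro!: derivative_eq_intros)

lemma Q1:
  "pd True B1 (x, y) - pd False A1 (x, y) = 2"
proof -
  let ?u = "x - 1/2" and ?v = "y - 1/2" and ?r = "rho x y"
  have dB: "((\<lambda>t. B1 (t, y)) has_real_derivative
     2 - (2 * ?v * ?v * (1 * Dd1 ?r + (?u + cc) * (Dd2 ?r * (2 * ?u))) + (Dd1 ?r * (2 * ?u) * (?u + cc) + Dd ?r))) (at x)"
    unfolding B1_def
    by (auto intro!: derivative_eq_intros Dd_chain Dd1_chain rho_dx) algebra
  have dA: "((\<lambda>t. A1 (x, t)) has_real_derivative
     - (2 * ?u * (?u + cc) * (Dd1 ?r + ?v * (Dd2 ?r * (2 * ?v))) + (Dd1 ?r * (2 * ?v) * ?v + Dd ?r))) (at y)"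
    unfolding A1_def
    by (auto intro!: derivative_eq_intros Dd_chain Dd1_chain rho_dy) algebra
  have e1: "pd True B1 (x, y) = deriv (\<lambda>t. B1 (t, y)) x" by (simp add: pd_def)
  have e2: "pd False A1 (x, y) = deriv (\<lambda>t. A1 (x, t)) y" by (simp add: pd_def)
  show ?thesis unfolding e1 e2 DERIV_imp_deriv[OF dB] DERIV_imp_deriv[OF dA] by (simp add: algebra_simps)
qed

end

lemma pd_x: "((\<lambda>t. f (t, y)) has_real_derivative D) (at x) \<Longrightarrow> pd True f (x, y) = D"
  by (simp add: pd_def DERIV_imp_deriv)
lemma pd_y: "((\<lambda>t. f (x, t)) has_real_derivative D) (at y) \<Longrightarrow> pd False f (x, y) = D"
  by (simp add: pd_def DERIV_imp_deriv)

lemma contact_A0: "contact_coeff (\<lambda>_. 0, B, C) (x, y) = C (x, y) * pd True B (x, y) - B (x, y) * pd True C (x, y)"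
proof -
  have "pd False (\<lambda>_. 0) (x, y) = 0" by (rule pd_y) simp
  then show ?thesis by (simp add: contact_coeff_def)
qed

lemma contact_trig:
  assumes dTx: "((\<lambda>t. T (t, y)) has_real_derivative Tx) (at x)"
    and dTy: "((\<lambda>t. T (x, t)) has_real_derivative Ty) (at y)"
    and dPx: "((\<lambda>t. P (t, y)) has_real_derivative Px) (at x)"
    and dMy: "((\<lambda>t. M (x, t)) has_real_derivative My) (at y)"
  shows "contact_coeff (\<lambda>q. sin (T q) * M q, \<lambda>q. sin (T q) * P q, \<lambda>q. cos (T q)) (x, y)
     = Tx * P (x, y) - Ty * M (x, y) + sin (T (x, y)) * cos (T (x, y)) * (Px - My)"
proof -
  have cx: "pd True (\<lambda>q. cos (T q)) (x, y) = - sin (T (x, y)) * Tx"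
    by (rule pd_x) (auto intro!: derivative_eq_intros dTx)
  have cy: "pd False (\<lambda>q. cos (T q)) (x, y) = - sin (T (x, y)) * Ty"
    by (rule pd_y) (auto intro!: derivative_eq_intros dTy)
  have bx: "pd True (\<lambda>q. sin (T q) * P q) (x, y) = cos (T (x, y)) * Tx * P (x, y) + sin (T (x, y)) * Px"
    by (rule pd_x) (auto intro!: derivative_eq_intros dTx dPx)
  have ay: "pd False (\<lambda>q. sin (T q) * M q) (x, y) = cos (T (x, y)) * Ty * M (x, y) + sin (T (x, y)) * My"
    by (rule pd_y) (auto intro!: derivative_eq_intros dTy dMy)
  have s: "(sin (T (x, y)))^2 + (cos (T (x, y)))^2 = 1" by simp
  define S where "S = sin (T (x, y))"
  define Co where "Co = cos (T (x, y))"
  have s: "S^2 + Co^2 = 1" by (simp add: S_def Co_def)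
  have "S * P (x, y) * (S * Tx) - S * M (x, y) * (S * Ty) +
        Co * (Co * Tx * P (x, y) + S * Px - (Co * Ty * M (x, y) + S * My))
      = (S^2 + Co^2) * (Tx * P (x, y) - Ty * M (x, y)) + S * Co * (Px - My)"
    by (simp add: algebra_simps power2_eq_square)
  then have "S * P (x, y) * (S * Tx) - S * M (x, y) * (S * Ty) +
        Co * (Co * Tx * P (x, y) + S * Px - (Co * Ty * M (x, y) + S * My))
      = Tx * P (x, y) - Ty * M (x, y) + S * Co * (Px - My)" using s by simp
  then show ?thesis
    unfolding contact_coeff_def using cx cy bx ay by (simp add: S_def Co_def)
qed

lemma contact_m:
  assumes dm: "((\<lambda>t. m (t, y)) has_real_derivative md) (at x)"
    and dg: "((\<lambda>t. g (t, y)) has_real_derivative gd) (at x)"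
  shows "contact_coeff (\<lambda>_. 0, \<lambda>q. m q * g q, m) (x, y) = (m (x, y))^2 * gd"
proof -
  have b: "pd True (\<lambda>q. m q * g q) (x, y) = md * g (x, y) + m (x, y) * gd"
    by (rule pd_x) (auto intro!: derivative_eq_intros dm dg)
  show ?thesis unfolding contact_A0 b pd_x[OF dm] by (simp add: algebra_simps power2_eq_square)
qed

lemma th_chain: "(f has_real_derivative f') (at x) \<Longrightarrow> ((\<lambda>t. th (f t)) has_real_derivative 2 * pi * f') (at x)"
  unfolding th_def by (auto intro!: derivative_eq_intros)

context L
begin

lemma a23: "(a 3)^2 \<noteq> (a 2)^2" by (rule a_sq_ne) auto
lemma a45: "(a 5)^2 \<noteq> (a 4)^2" by (rule a_sq_ne) auto
lemma a67: "(a 7)^2 \<noteq> (a 6)^2" by (rule a_sq_ne) auto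
lemma a89: "(a 9)^2 \<noteq> (a 8)^2" by (rule a_sq_ne) auto

definition "b1d u = dl * (2 * pi * (dl / KK)) / (cos (th (h u)))^2"

lemma h_deriv: "(h has_real_derivative dl / KK) (at u)"
  unfolding h_def by (auto intro!: derivative_eq_intros simp: KK_def)

lemma trig_aux: "c * c + s * s = (1::real) \<Longrightarrow> d * (c * k) * c - d * s * (- s * k) = d * k"
proof -
  assume "c * c + s * s = 1"
  moreover have "d * (c * k) * c - d * s * (- s * k) = d * k * (c * c + s * s)" by (simp add: algebra_simps)
  ultimately show ?thesis by simp
qed

lemma b1_deriv: "cos (th (h u)) \<noteq> 0 \<Longrightarrow> (b1 has_real_derivative b1d u) (at u)"
proof -
  assume c: "cos (th (h u)) \<noteq> 0"
  have t: "((\<lambda>u. th (h u)) has_real_derivative 2 * pi * (dl / KK)) (at u)"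
    by (rule th_chain[OF h_deriv])
  have "(b1 has_real_derivative
     (dl * (cos (th (h u)) * (2 * pi * (dl / KK))) * cos (th (h u)) -
      dl * sin (th (h u)) * (- sin (th (h u)) * (2 * pi * (dl / KK)))) / (cos (th (h u)) * cos (th (h u)))) (at u)"
    unfolding b1_def[abs_def] using c by (auto intro!: derivative_eq_intros t)
  moreover have "(dl * (cos (th (h u)) * (2 * pi * (dl / KK))) * cos (th (h u)) -
      dl * sin (th (h u)) * (- sin (th (h u)) * (2 * pi * (dl / KK)))) / (cos (th (h u)) * cos (th (h u)))
      = b1d u"
  proof -
    have "(dl * (cos (th (h u)) * (2 * pi * (dl / KK))) * cos (th (h u)) -
      dl * sin (th (h u)) * (- sin (th (h u)) * (2 * pi * (dl / KK))))
      = dl * (2 * pi * (dl / KK))"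
      by (rule trig_aux) simp
    then show ?thesis by (simp add: b1d_def power2_eq_square)
  qed
  ultimately show ?thesis by simp
qed

lemma b1_chain: "cos (th (h (f x))) \<noteq> 0 \<Longrightarrow> (f has_real_derivative f') (at x) \<Longrightarrow>
  ((\<lambda>t. b1 (f t)) has_real_derivative b1d (f x) * f') (at x)"
  by (rule DERIV_chain2[OF b1_deriv])

definition "A2 = (\<lambda>_::real\<times>real. 0::real)"
definition "B2 = (\<lambda>(x, y). 2 * (x - 1/2) + cc + cutf (a 2) (a 3) (rho x y) * (b1 (x - 1/2) - 2 * (x - 1/2) - cc))"
definition "C2 = (\<lambda>(x::real, y::real). 1::real)"

lemma Q2:
  assumes "cos (th (h (x - 1/2))) \<noteq> 0"
  shows "contact_coeff (A2, B2, C2) (x, y) =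
    2 + cutd (a 2) (a 3) (rho x y) * (2 * (x - 1/2)) * (b1 (x - 1/2) - 2 * (x - 1/2) - cc)
      + cutf (a 2) (a 3) (rho x y) * (b1d (x - 1/2) - 2)"
proof -
  have d1: "((\<lambda>t. t - 1/2) has_real_derivative 1) (at x)" by (auto intro!: derivative_eq_intros)
  have db: "((\<lambda>t. b1 (t - 1/2)) has_real_derivative b1d (x - 1/2)) (at x)"
    using b1_chain[of "\<lambda>t. t - 1/2" x 1, OF _ d1] assms by simp
  have "pd True B2 (x, y) = 2 + cutd (a 2) (a 3) (rho x y) * (2 * (x - 1/2)) * (b1 (x - 1/2) - 2 * (x - 1/2) - cc)
      + cutf (a 2) (a 3) (rho x y) * (b1d (x - 1/2) - 2)"
    by (rule pd_x) (unfold B2_def, (auto intro!: derivative_eq_intros cutf_chain[OF a23] rho_dx db); simp add: algebra_simps)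
  moreover have "pd True C2 (x, y) = 0" by (rule pd_x) (simp add: C2_def)
  ultimately show ?thesis
    using contact_A0[of B2 C2 x y] by (simp add: A2_def C2_def)
qed

definition "m3 = (\<lambda>(x, y). 1 + cutf (a 4) (a 5) (rho x y) * (cos (th (h (x - 1/2))) - 1))"
definition "A3 = (\<lambda>_::real\<times>real. 0::real)"
definition "B3 = (\<lambda>q. m3 q * b1 (fst q - 1/2))"
definition "C3 = m3"

lemma Q3:
  assumes "cos (th (h (x - 1/2))) \<noteq> 0"
  shows "contact_coeff (A3, B3, C3) (x, y) = (m3 (x, y))^2 * b1d (x - 1/2)"
proof -
  have d1: "((\<lambda>t. t - 1/2) has_real_derivative 1) (at x)" by (auto intro!: derivative_eq_intros)
  have db: "((\<lambda>t. b1 (fst (t, y) - 1/2)) has_real_derivative b1d (x - 1/2)) (at x)"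
    using b1_chain[of "\<lambda>t. t - 1/2" x 1, OF _ d1] assms by simp
  have dm: "((\<lambda>t. m3 (t, y)) has_real_derivative
     cutd (a 4) (a 5) (rho x y) * (2 * (x - 1/2)) * (cos (th (h (x - 1/2))) - 1)
      + cutf (a 4) (a 5) (rho x y) * (- sin (th (h (x - 1/2))) * (2 * pi * (dl / KK)))) (at x)"
    unfolding m3_def
    by (auto intro!: derivative_eq_intros cutf_chain[OF a45] rho_dx th_chain DERIV_chain2[OF h_deriv])
  show ?thesis using contact_m[OF dm db] by (simp add: A3_def B3_def C3_def)
qed

definition "mu r = 1/KK + (1 - 1/KK) * cutf (a 6) (a 7) r"
definition "T4 = (\<lambda>(x, y). th (- rp + dl * (mu (rho x y) * (x - 1/2) + rp)))"
definition "A4 = (\<lambda>q. sin (T4 q) * 0)"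
definition "B4 = (\<lambda>q. sin (T4 q) * dl)"
definition "C4 = (\<lambda>q. cos (T4 q))"

lemma Q4: "contact_coeff (A4, B4, C4) (x, y) =
   dl * (2 * pi * (dl * (mu (rho x y) + (x - 1/2) * ((1 - 1/KK) * cutd (a 6) (a 7) (rho x y) * (2 * (x - 1/2))))))"
proof -
  have dTx: "((\<lambda>t. T4 (t, y)) has_real_derivative
       2 * pi * (dl * (mu (rho x y) + (x - 1/2) * ((1 - 1/KK) * cutd (a 6) (a 7) (rho x y) * (2 * (x - 1/2)))))) (at x)"
    unfolding T4_def mu_def
    by ((auto intro!: derivative_eq_intros cutf_chain[OF a67] rho_dx th_chain); simp add: algebra_simps)
  have dTy: "((\<lambda>t. T4 (x, t)) has_real_derivative
       2 * pi * (dl * ((x - 1/2) * ((1 - 1/KK) * cutd (a 6) (a 7) (rho x y) * (2 * (y - 1/2)))))) (at y)"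
    unfolding T4_def mu_def
    by ((auto intro!: derivative_eq_intros cutf_chain[OF a67] rho_dy th_chain); simp add: algebra_simps)
  have c: "((\<lambda>t. (\<lambda>q::real\<times>real. dl) (t, y)) has_real_derivative 0) (at x)" by simp
  have c2: "((\<lambda>t. (\<lambda>q::real\<times>real. 0::real) (x, t)) has_real_derivative 0) (at y)" by simp
  show ?thesis
    using contact_trig[OF dTx dTy c c2] unfolding A4_def B4_def C4_def by simp
qed

definition "F r = dl + (1 - dl) * cutf (a 8) (a 9) r"
definition "F1 r = (1 - dl) * cutd (a 8) (a 9) r"
definition "F2 r = (1 - dl) * cutdd (a 8) (a 9) r"
definition "T5 = (\<lambda>(x, y). th (- rp + F (rho x y) * ((x - 1/2) + rp)))"
definition "M5 = (\<lambda>(x, y). 2 * (x - 1/2) * (y - 1/2) * F1 (rho x y))"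
definition "P5 = (\<lambda>(x, y). F (rho x y) + 2 * (y - 1/2) * (y - 1/2) * F1 (rho x y))"
definition "A5 = (\<lambda>q. sin (T5 q) * M5 q)"
definition "B5 = (\<lambda>q. sin (T5 q) * P5 q)"
definition "C5 = (\<lambda>q. cos (T5 q))"

lemma F_chain: "(f has_real_derivative f') (at x) \<Longrightarrow> ((\<lambda>t. F (f t)) has_real_derivative F1 (f x) * f') (at x)"
  unfolding F_def F1_def using cutf_chain[OF a89] by (auto intro!: derivative_eq_intros)
lemma F1_chain: "(f has_real_derivative f') (at x) \<Longrightarrow> ((\<lambda>t. F1 (f t)) has_real_derivative F2 (f x) * f') (at x)"
  unfolding F1_def F2_def using cutd_chain[OF a89] by (auto intro!: derivative_eq_intros)

lemma Q5: "contact_coeff (A5, B5, C5) (x, y) =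
   2 * pi * (F (rho x y) * (F (rho x y) + 2 * F1 (rho x y) * ((x - 1/2)^2 + (y - 1/2)^2 + rp * (x - 1/2))))"
proof -
  let ?u = "x - 1/2" and ?v = "y - 1/2" and ?r = "rho x y"
  have dTx: "((\<lambda>t. T5 (t, y)) has_real_derivative 2 * pi * (F1 ?r * (2 * ?u) * (?u + rp) + F ?r)) (at x)"
    unfolding T5_def by ((auto intro!: derivative_eq_intros F_chain rho_dx th_chain); simp add: algebra_simps)
  have dTy: "((\<lambda>t. T5 (x, t)) has_real_derivative 2 * pi * (F1 ?r * (2 * ?v) * (?u + rp))) (at y)"
    unfolding T5_def by ((auto intro!: derivative_eq_intros F_chain rho_dy th_chain); simp add: algebra_simps)
  have dPx: "((\<lambda>t. P5 (t, y)) has_real_derivative F1 ?r * (2 * ?u) + 2 * ?v * ?v * (F2 ?r * (2 * ?u))) (at x)"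
    unfolding P5_def by ((auto intro!: derivative_eq_intros F_chain F1_chain rho_dx); simp add: algebra_simps)
  have dMy: "((\<lambda>t. M5 (x, t)) has_real_derivative 2 * ?u * (F1 ?r + ?v * (F2 ?r * (2 * ?v)))) (at y)"
    unfolding M5_def by (auto intro!: derivative_eq_intros F1_chain rho_dy) algebra
  have e: "F1 ?r * (2 * ?u) + 2 * ?v * ?v * (F2 ?r * (2 * ?u)) - 2 * ?u * (F1 ?r + ?v * (F2 ?r * (2 * ?v))) = 0"
    by (simp add: field_simps)
  show ?thesis
    using contact_trig[OF dTx dTy dPx dMy] unfolding A5_def B5_def C5_def e
    by (simp add: M5_def P5_def algebra_simps power2_eq_square)
qed

end

context L
begin

lemma dl_pos: "0 < dl" using r0_gt by (simp add: dl_def)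
lemma dl_small: "dl < 1/8" using R_lt eps_pos by (simp add: dl_def)
lemma KK_pos: "0 < KK" by (simp add: KK_def)

lemma rp_gt: "1/4 < rp"
  using dl_pos dl_small by (simp add: rp_def KK_def field_simps)
lemma rp_le: "rp \<le> r0"
proof -
  have r: "r0 = 2 * dl + 1/4" by (simp add: dl_def field_simps)
  have aux: "\<And>d::real. (2 * d + 1/4) * (1 - d) - (1/4 + d / 64) = d * (2 - 2 * d - 1/4 - 1/64)"
    by (simp add: field_simps)
  have "r0 * (1 - dl) - (1/4 + dl / KK) = (2 * dl + 1/4) * (1 - dl) - (1/4 + dl / KK)"
    by (subst r[symmetric]) (rule refl)
  also have "\<dots> = dl * (2 - 2 * dl - 1/4 - 1/64)"
    using aux[of dl] by (simp add: KK_def)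
  also have "\<dots> \<ge> 0" using dl_pos dl_small by (intro mult_nonneg_nonneg) auto
  finally have "1/4 + dl / KK \<le> r0 * (1 - dl)" by simp
  then show ?thesis using dl_small by (simp add: rp_def field_simps)
qed

lemma th_h: "th (h u) = pi / 2 - 2 * pi * dl * (1 - u) / KK"
proof -
  have "rp * (1 - dl) = 1/4 + dl / KK" using dl_small by (simp add: rp_def)
  then have hu: "h u = -(1/4 + dl/KK) + dl * u / KK" by (simp add: h_def algebra_simps)
  show ?thesis unfolding th_def hu by (simp add: field_simps KK_def)
qed

lemma cos_th_h:
  assumes "\<bar>u\<bar> < 1/2"
  shows "0 < cos (th (h u))" "cos (th (h u)) \<le> 3 * pi * dl / KK" "cos (th (h u)) \<le> 1"
proof -
  define yv where "yv = 2 * pi * dl * (1 - u) / KK"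
  have c: "cos (th (h u)) = sin yv" by (simp add: th_h yv_def cos_diff)
  have "0 < 2 * pi * dl * (1 - u)" using assms dl_pos by (intro mult_pos_pos) auto
  then have y0: "0 < yv" by (simp add: yv_def KK_def)
  have "2 * pi * dl * (1 - u) \<le> 2 * pi * dl * (3/2)" using assms dl_pos by (intro mult_left_mono) auto
  then have y1: "yv \<le> 3 * pi * dl / KK" using KK_pos by (simp add: yv_def divide_right_mono)
  have y2: "yv < pi"
  proof -
    have "3 * pi * dl / KK < pi" using dl_small pi_gt_zero by (simp add: KK_def field_simps)
    then show ?thesis using y1 by simp
  qed
  show "0 < cos (th (h u))" using c sin_gt_zero[OF y0 y2] by simp
  show "cos (th (h u)) \<le> 3 * pi * dl / KK" using c sin_x_le_x[of yv] y0 y1 by simp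
  show "cos (th (h u)) \<le> 1" by simp
qed

lemma b1d_ge2:
  assumes "\<bar>u\<bar> < 1/2"
  shows "2 \<le> b1d u"
proof -
  define c where "c = cos (th (h u))"
  have c0: "0 < c" and c1: "c \<le> 3 * pi * dl / KK" using cos_th_h[OF assms] by (auto simp: c_def)
  have "c^2 \<le> (3 * pi * dl / KK)^2" using c0 c1 by (simp add: power_mono)
  then have "2 * KK * c^2 \<le> 2 * KK * (3 * pi * dl / KK)^2" using KK_pos by simp
  also have "\<dots> = 18 * pi * (pi * dl * dl) / 64" by (simp add: KK_def power2_eq_square)
  also have "\<dots> \<le> 128 * (pi * dl * dl) / 64"
  proof -
    have p: "18 * pi \<le> 128" using pi_less_4 by simp
    have "18 * pi * (pi * dl * dl) \<le> 128 * (pi * dl * dl)" by (rule mult_right_mono[OF p]) (use dl_pos in simp)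
    then show ?thesis by simp
  qed
  also have "\<dots> = dl * (2 * pi * dl)" by simp
  finally have *: "2 * (KK * c^2) \<le> dl * (2 * pi * dl)" by simp
  have "b1d u = dl * (2 * pi * dl) / (KK * c^2)" by (simp add: b1d_def c_def)
  then show ?thesis using * c0 KK_pos by (simp add: pos_le_divide_eq)
qed

lemma b1_mono:
  assumes "\<bar>u\<bar> < 1/2"
  shows "0 \<le> u * (b1 u - 2 * u - cc)"
proof -
  let ?f = "\<lambda>t. b1 t - 2 * t"
  have d: "\<exists>y. DERIV ?f t :> y \<and> 0 \<le> y" if "\<bar>t\<bar> < 1/2" for t
  proof -
    have "DERIV ?f t :> b1d t - 2"
      using b1_deriv[of t] cos_th_h(1)[OF that] by (auto intro!: derivative_eq_intros)
    then show ?thesis using b1d_ge2[OF that] by auto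
  qed
  show ?thesis
  proof (cases "0 \<le> u")
    case True
    have "?f 0 \<le> ?f u" by (rule DERIV_nonneg_imp_nondecreasing[OF True]) (use d assms in auto)
    then show ?thesis using True by (simp add: cc_def)
  next
    case False
    have "?f u \<le> ?f 0" by (rule DERIV_nonneg_imp_nondecreasing) (use d assms False in auto)
    then have "b1 u - 2 * u - cc \<le> 0" by (simp add: cc_def)
    then show ?thesis using False by (simp add: mult_nonpos_nonpos)
  qed
qed

end

lemma contact_local:
  assumes "open V" "p \<in> V" "\<And>q. q \<in> V \<Longrightarrow> A q = A' q \<and> B q = B' q \<and> C q = C' q"
  shows "contact_coeff (A, B, C) p = contact_coeff (A', B', C') p"
proof -
  have a: "A p = A' p" "B p = B' p" "C p = C' p" using assms(2,3) by auto
  have "pd b A p = pd b A' p" "pd b B p = pd b B' p" "pd b C p = pd b C' p" for b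
    using pd_local[OF assms(1,2), of A A' b] pd_local[OF assms(1,2), of B B' b] pd_local[OF assms(1,2), of C C' b]
      assms(3) by auto
  then show ?thesis using a by (simp add: contact_coeff_def)
qed

lemma sm_divc: "f \<in> sm U \<Longrightarrow> (\<lambda>p. f p / c) \<in> sm U"
  by (simp add: divide_inverse) (intro sm.mult sm.const)

lemmas smI = sm.const sm.fstI sm.sndI sm.add sm.mult sm.sinI sm.cosI sm_minus sm_diff sm_power sm_cutf sm_cutd sm_divc

context L
begin

lemma sm_thh: "(\<lambda>p. th (h (fst p - 1/2))) \<in> sm U"
  unfolding th_def h_def by (intro smI)

lemma sm_b1: "(\<forall>p\<in>U. cos (th (h (fst p - 1/2))) \<noteq> 0) \<Longrightarrow> (\<lambda>p. b1 (fst p - 1/2)) \<in> sm U"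
  unfolding b1_def by (intro sm_divide sm.mult sm.const sm.sinI sm.cosI sm_thh) auto

lemma sm_rho: "(\<lambda>p. rho (fst p) (snd p)) \<in> sm U"
  unfolding rho_def by (intro smI)

lemma sm_Z1: "A1 \<in> sm U" "B1 \<in> sm U" "C1 \<in> sm U"
  unfolding A1_def B1_def C1_def split_beta' Dd_def Dd1_def
  by (intro smI sm_rho)+

lemma sm_Z2: "\<forall>p\<in>U. cos (th (h (fst p - 1/2))) \<noteq> 0 \<Longrightarrow> A2 \<in> sm U \<and> B2 \<in> sm U \<and> C2 \<in> sm U"
  unfolding A2_def B2_def C2_def split_beta'
  by (intro conjI smI sm_rho sm_b1)

lemma sm_Z3: "\<forall>p\<in>U. cos (th (h (fst p - 1/2))) \<noteq> 0 \<Longrightarrow> A3 \<in> sm U \<and> B3 \<in> sm U \<and> C3 \<in> sm U"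
  unfolding A3_def B3_def C3_def m3_def split_beta'
  by (intro conjI smI sm_rho sm_b1 sm_thh)

lemma sm_Z4: "A4 \<in> sm U \<and> B4 \<in> sm U \<and> C4 \<in> sm U"
  unfolding A4_def B4_def C4_def T4_def mu_def th_def split_beta'
  by (intro conjI smI sm_rho)

lemma sm_Z5: "A5 \<in> sm U \<and> B5 \<in> sm U \<and> C5 \<in> sm U"
  unfolding A5_def B5_def C5_def T5_def M5_def P5_def F_def F1_def th_def split_beta'
  by (intro conjI smI sm_rho)

end

context L
begin

lemma a_nonneg: "0 \<le> k \<Longrightarrow> 0 \<le> a k" using a_pos[of k] by simp

lemma Q1v: "contact_coeff (A1, B1, C1) (x, y) = 2"
proof -
  have "pd False C1 (x, y) = 0" by (rule pd_y) (simp add: C1_def)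
  moreover have "pd True C1 (x, y) = 0" by (rule pd_x) (simp add: C1_def)
  ultimately show ?thesis using Q1[of x y] by (simp add: contact_coeff_def C1_def)
qed

lemma Q2pos: "\<bar>x - 1/2\<bar> < 1/2 \<Longrightarrow> 0 < contact_coeff (A2, B2, C2) (x, y)"
proof -
  assume u: "\<bar>x - 1/2\<bar> < 1/2"
  have c: "cos (th (h (x - 1/2))) \<noteq> 0" using cos_th_h(1)[OF u] by simp
  have t1: "0 \<le> cutd (a 2) (a 3) (rho x y) * (2 * (x - 1/2)) * (b1 (x - 1/2) - 2 * (x - 1/2) - cc)"
  proof -
    have "0 \<le> cutd (a 2) (a 3) (rho x y)" by (rule cutd_ge0) (auto intro: a_mono a_nonneg)
    moreover have "0 \<le> (x - 1/2) * (b1 (x - 1/2) - 2 * (x - 1/2) - cc)" by (rule b1_mono[OF u])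
    ultimately have "0 \<le> cutd (a 2) (a 3) (rho x y) * (2 * ((x - 1/2) * (b1 (x - 1/2) - 2 * (x - 1/2) - cc)))"
      by simp
    then show ?thesis by (simp add: algebra_simps)
  qed
  have t2: "0 \<le> cutf (a 2) (a 3) (rho x y) * (b1d (x - 1/2) - 2)"
    using cutf_ge0 b1d_ge2[OF u] by simp
  show ?thesis using Q2[OF c, of y] t1 t2 by simp
qed

lemma Q3pos: "\<bar>x - 1/2\<bar> < 1/2 \<Longrightarrow> 0 < contact_coeff (A3, B3, C3) (x, y)"
proof -
  assume u: "\<bar>x - 1/2\<bar> < 1/2"
  have c0: "0 < cos (th (h (x - 1/2)))" and c1: "cos (th (h (x - 1/2))) \<le> 1" using cos_th_h[OF u] by auto
  have "m3 (x, y) = (1 - cutf (a 4) (a 5) (rho x y)) + cutf (a 4) (a 5) (rho x y) * cos (th (h (x - 1/2)))"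
    by (simp add: m3_def algebra_simps)
  also have "\<dots> \<ge> (1 - cutf (a 4) (a 5) (rho x y)) * cos (th (h (x - 1/2))) + cutf (a 4) (a 5) (rho x y) * cos (th (h (x - 1/2)))"
    using cutf_le1[of "a 4" "a 5" "rho x y"] c1 by (simp add: mult_left_le)
  finally have "m3 (x, y) \<ge> cos (th (h (x - 1/2)))" by (simp add: algebra_simps)
  then have "0 < m3 (x, y)" using c0 by simp
  moreover have "0 < b1d (x - 1/2)" using b1d_ge2[OF u] by simp
  ultimately show ?thesis using Q3[of x y] c0 by simp
qed

lemma Q4pos: "0 < contact_coeff (A4, B4, C4) (x, y)"
proof -
  have "0 < mu (rho x y)"
  proof -
    have "0 \<le> (1 - 1/KK) * cutf (a 6) (a 7) (rho x y)" using cutf_ge0 by (simp add: KK_def)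
    then show ?thesis by (simp add: mu_def KK_def)
  qed
  moreover have "0 \<le> (x - 1/2) * ((1 - 1/KK) * cutd (a 6) (a 7) (rho x y) * (2 * (x - 1/2)))"
  proof -
    have "0 \<le> cutd (a 6) (a 7) (rho x y)" by (rule cutd_ge0) (auto intro: a_mono a_nonneg)
    then have "0 \<le> 2 * (1 - 1/KK) * cutd (a 6) (a 7) (rho x y) * ((x - 1/2) * (x - 1/2))"
      by (simp add: KK_def)
    then show ?thesis by (simp add: algebra_simps)
  qed
  ultimately show ?thesis using Q4[of x y] dl_pos by simp
qed

lemma Q5pos: "0 < contact_coeff (A5, B5, C5) (x, y)"
proof -
  let ?r = "rho x y" and ?u = "x - 1/2" and ?v = "y - 1/2"
  have F0: "dl \<le> F ?r"
  proof -
    have "0 \<le> (1 - dl) * cutf (a 8) (a 9) ?r" using cutf_ge0 dl_small by simp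
    then show ?thesis by (simp add: F_def)
  qed
  have "0 \<le> F1 ?r * (?u^2 + ?v^2 + rp * ?u)"
  proof (cases "?r \<le> (a 8)^2")
    case True
    then have "cutd (a 8) (a 9) ?r = 0" by (intro cutd_0) (auto intro: a_mono a_nonneg)
    then show ?thesis by (simp add: F1_def)
  next
    case False
    have a8: "rp \<le> a 8" using rp_le a_mono[of 0 8] by (simp add: a0)
    have rp0: "0 \<le> rp" using rp_gt by simp
    have "rp^2 \<le> (a 8)^2" using a8 rp0 by (simp add: power_mono)
    then have rr: "rp^2 \<le> ?r" using False by simp
    have uu: "?u^2 \<le> ?r" by (simp add: rho_def)
    have "(rp * \<bar>?u\<bar>)^2 \<le> ?r * ?r"
      using mult_mono[OF rr uu] by (simp add: power_mult_distrib rho_def)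
    then have "(rp * \<bar>?u\<bar>)^2 \<le> ?r^2" by (simp add: power2_eq_square)
    then have "rp * \<bar>?u\<bar> \<le> ?r" by (rule power2_le_imp_le) (simp add: rho_def)
    moreover have "- (rp * \<bar>?u\<bar>) \<le> rp * ?u"
      using mult_left_mono[of "- \<bar>?u\<bar>" ?u rp] rp0 by simp
    ultimately have "0 \<le> ?u^2 + ?v^2 + rp * ?u" unfolding rho_def by linarith
    moreover have "0 \<le> F1 ?r" unfolding F1_def using dl_small
      by (intro mult_nonneg_nonneg cutd_ge0) (auto intro: a_mono a_nonneg)
    ultimately show ?thesis by simp
  qed
  then have "0 < F ?r + 2 * F1 ?r * (?u^2 + ?v^2 + rp * ?u)" using F0 dl_pos by simp
  moreover have "0 < F ?r" using F0 dl_pos by simp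
  ultimately show ?thesis using Q5[of x y] by simp
qed

end

context L
begin

definition "s k = (a k)^2"
lemma s_mono: "k < l \<Longrightarrow> 0 \<le> k \<Longrightarrow> s k < s l"
  unfolding s_def using a_mono[of k l] a_nonneg[of k] by (simp add: power_strict_mono)

definition "Th1 = (s 1 + s 2) / 2"
definition "Th2 = (s 3 + s 4) / 2"
definition "Th3 = (s 5 + s 6) / 2"
definition "Th4 = (s 7 + s 8) / 2"

lemma order:
  "s 1 < Th1" "Th1 < s 2" "s 2 < s 3" "s 3 < Th2" "Th2 < s 4" "s 4 < s 5" "s 5 < Th3" "Th3 < s 6"
  "s 6 < s 7" "s 7 < Th4" "Th4 < s 8" "s 8 < s 9" "r0^2 < s 1"
proof -
  have "s 1 < s 2" "s 2 < s 3" "s 3 < s 4" "s 4 < s 5" "s 5 < s 6" "s 6 < s 7" "s 7 < s 8" "s 8 < s 9" "s 0 < s 1"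
    by (rule s_mono; simp)+
  moreover have "s 0 = r0^2" by (simp add: s_def a0)
  ultimately show "s 1 < Th1" "Th1 < s 2" "s 2 < s 3" "s 3 < Th2" "Th2 < s 4" "s 4 < s 5" "s 5 < Th3" "Th3 < s 6"
  "s 6 < s 7" "s 7 < Th4" "Th4 < s 8" "s 8 < s 9" "r0^2 < s 1"
    unfolding Th1_def Th2_def Th3_def Th4_def by auto
qed

lemma s6_small: "s 6 < 1/4"
proof -
  have "a 6 < 1/2" using R_lt eps_pos by (simp add: a_def e_def)
  then have "(a 6)^2 < (1/2)^2" using a_nonneg[of 6] by (intro power_strict_mono) auto
  then show ?thesis by (simp add: s_def power2_eq_square)
qed

lemma u_small: "rho x y < 1/4 \<Longrightarrow> \<bar>x - 1/2\<bar> < 1/2"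
proof -
  assume r: "rho x y < 1/4"
  have "\<bar>x - 1/2\<bar>^2 \<le> rho x y" by (simp add: rho_def)
  then have "\<bar>x - 1/2\<bar>^2 < (1/2)^2" using r by (simp add: power2_eq_square)
  then show ?thesis by (rule power2_less_imp_less) simp
qed

definition "sel f1 f2 f3 f4 f5 = (\<lambda>q. let r = rho (fst q) (snd q) in
   if r < Th1 then f1 q else if r < Th2 then f2 q else if r < Th3 then f3 q else if r < Th4 then f4 q else f5 q)"

definition "rr q = rho (fst q) (snd q)"

lemma sel_zones:
  fixes f1 f2 f3 f4 f5 :: "real \<times> real \<Rightarrow> real"
  assumes e12: "\<And>q. s 1 < rr q \<Longrightarrow> rr q < s 2 \<Longrightarrow> f1 q = f2 q"
    and e23: "\<And>q. s 3 < rr q \<Longrightarrow> rr q < s 4 \<Longrightarrow> f2 q = f3 q"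
    and e34: "\<And>q. s 5 < rr q \<Longrightarrow> rr q < s 6 \<Longrightarrow> f3 q = f4 q"
    and e45: "\<And>q. s 7 < rr q \<Longrightarrow> rr q < s 8 \<Longrightarrow> f4 q = f5 q"
  shows "rr q < s 2 \<Longrightarrow> sel f1 f2 f3 f4 f5 q = f1 q"
    and "s 1 < rr q \<Longrightarrow> rr q < s 4 \<Longrightarrow> sel f1 f2 f3 f4 f5 q = f2 q"
    and "s 3 < rr q \<Longrightarrow> rr q < s 6 \<Longrightarrow> sel f1 f2 f3 f4 f5 q = f3 q"
    and "s 5 < rr q \<Longrightarrow> rr q < s 8 \<Longrightarrow> sel f1 f2 f3 f4 f5 q = f4 q"
    and "s 7 < rr q \<Longrightarrow> sel f1 f2 f3 f4 f5 q = f5 q"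
  using order e12[of q] e23[of q] e34[of q] e45[of q]
  by (auto simp: sel_def rr_def[symmetric] Let_def)

lemma E12: "s 1 < rho x y \<Longrightarrow> rho x y < s 2 \<Longrightarrow>
  A1 (x, y) = A2 (x, y) \<and> B1 (x, y) = B2 (x, y) \<and> C1 (x, y) = C2 (x, y)"
proof -
  assume r: "s 1 < rho x y" "rho x y < s 2"
  have o: "r0 < a 1" "0 \<le> r0" "a 2 < a 3" "0 \<le> a 2"
    using a_mono[of 0 1] a0 r0_gt a_mono[of 2 3] a_nonneg[of 2] by auto
  have "cutf r0 (a 1) (rho x y) = 1" using r o order by (intro cutf_1) (auto simp: s_def)
  moreover have "cutd r0 (a 1) (rho x y) = 0" using r o order by (intro cutd_1) (auto simp: s_def)
  moreover have "cutf (a 2) (a 3) (rho x y) = 0" using r o by (intro cutf_0) (auto simp: s_def)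
  ultimately show ?thesis by (simp add: A1_def A2_def B1_def B2_def C1_def C2_def Dd_def Dd1_def)
qed

lemma E23: "s 3 < rho x y \<Longrightarrow> rho x y < s 4 \<Longrightarrow>
  A2 (x, y) = A3 (x, y) \<and> B2 (x, y) = B3 (x, y) \<and> C2 (x, y) = C3 (x, y)"
proof -
  assume r: "s 3 < rho x y" "rho x y < s 4"
  have o: "a 2 < a 3" "0 \<le> a 2" "a 4 < a 5" "0 \<le> a 4"
    using a_mono[of 2 3] a_nonneg[of 2] a_mono[of 4 5] a_nonneg[of 4] by auto
  have "cutf (a 2) (a 3) (rho x y) = 1" using r o by (intro cutf_1) (auto simp: s_def)
  moreover have "cutf (a 4) (a 5) (rho x y) = 0" using r o by (intro cutf_0) (auto simp: s_def)
  ultimately show ?thesis by (simp add: A3_def A2_def B3_def B2_def C3_def C2_def m3_def)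
qed

lemma E34: "s 5 < rho x y \<Longrightarrow> rho x y < s 6 \<Longrightarrow>
  A3 (x, y) = A4 (x, y) \<and> B3 (x, y) = B4 (x, y) \<and> C3 (x, y) = C4 (x, y)"
proof -
  assume r: "s 5 < rho x y" "rho x y < s 6"
  have o: "a 4 < a 5" "0 \<le> a 4" "a 6 < a 7" "0 \<le> a 6"
    using a_mono[of 4 5] a_nonneg[of 4] a_mono[of 6 7] a_nonneg[of 6] by auto
  have u: "\<bar>x - 1/2\<bar> < 1/2" using r s6_small by (intro u_small[of x y]) simp
  have c: "cos (th (h (x - 1/2))) \<noteq> 0" using cos_th_h(1)[OF u] by simp
  have "cutf (a 4) (a 5) (rho x y) = 1" using r o by (intro cutf_1) (auto simp: s_def)
  moreover have "cutf (a 6) (a 7) (rho x y) = 0" using r o by (intro cutf_0) (auto simp: s_def)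
  moreover have "T4 (x, y) = th (h (x - 1/2))" using calculation
    by (simp add: T4_def mu_def h_def KK_def)
  ultimately show ?thesis using c
    by (simp add: A3_def A4_def B3_def B4_def C3_def C4_def m3_def b1_def)
qed

lemma E45: "s 7 < rho x y \<Longrightarrow> rho x y < s 8 \<Longrightarrow>
  A4 (x, y) = A5 (x, y) \<and> B4 (x, y) = B5 (x, y) \<and> C4 (x, y) = C5 (x, y)"
proof -
  assume r: "s 7 < rho x y" "rho x y < s 8"
  have o: "a 6 < a 7" "0 \<le> a 6" "a 8 < a 9" "0 \<le> a 8"
    using a_mono[of 6 7] a_nonneg[of 6] a_mono[of 8 9] a_nonneg[of 8] by auto
  have "cutf (a 6) (a 7) (rho x y) = 1" using r o by (intro cutf_1) (auto simp: s_def)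
  moreover have "cutf (a 8) (a 9) (rho x y) = 0" using r o by (intro cutf_0) (auto simp: s_def)
  moreover have "cutd (a 8) (a 9) (rho x y) = 0" using r o by (intro cutd_0) (auto simp: s_def)
  moreover have "T4 (x, y) = T5 (x, y)" using calculation
    by (simp add: T4_def T5_def mu_def F_def)
  ultimately show ?thesis
    by (simp add: A4_def A5_def B4_def B5_def C4_def C5_def M5_def P5_def F_def F1_def)
qed

definition "Ag = sel A1 A2 A3 A4 A5"
definition "Bg = sel B1 B2 B3 B4 B5"
definition "Cg = sel C1 C2 C3 C4 C5"

lemma EQ12: "s 1 < rr q \<Longrightarrow> rr q < s 2 \<Longrightarrow> A1 q = A2 q \<and> B1 q = B2 q \<and> C1 q = C2 q"
  by (cases q) (simp add: rr_def E12)
lemma EQ23: "s 3 < rr q \<Longrightarrow> rr q < s 4 \<Longrightarrow> A2 q = A3 q \<and> B2 q = B3 q \<and> C2 q = C3 q"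
  by (cases q) (simp add: rr_def E23)
lemma EQ34: "s 5 < rr q \<Longrightarrow> rr q < s 6 \<Longrightarrow> A3 q = A4 q \<and> B3 q = B4 q \<and> C3 q = C4 q"
  by (cases q) (simp add: rr_def E34)
lemma EQ45: "s 7 < rr q \<Longrightarrow> rr q < s 8 \<Longrightarrow> A4 q = A5 q \<and> B4 q = B5 q \<and> C4 q = C5 q"
  by (cases q) (simp add: rr_def E45)

lemma EA12: "s 1 < rr q \<Longrightarrow> rr q < s 2 \<Longrightarrow> A1 q = A2 q" using EQ12 by blast
lemma EA23: "s 3 < rr q \<Longrightarrow> rr q < s 4 \<Longrightarrow> A2 q = A3 q" using EQ23 by blast
lemma EA34: "s 5 < rr q \<Longrightarrow> rr q < s 6 \<Longrightarrow> A3 q = A4 q" using EQ34 by blast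
lemma EA45: "s 7 < rr q \<Longrightarrow> rr q < s 8 \<Longrightarrow> A4 q = A5 q" using EQ45 by blast
lemma EB12: "s 1 < rr q \<Longrightarrow> rr q < s 2 \<Longrightarrow> B1 q = B2 q" using EQ12 by blast
lemma EB23: "s 3 < rr q \<Longrightarrow> rr q < s 4 \<Longrightarrow> B2 q = B3 q" using EQ23 by blast
lemma EB34: "s 5 < rr q \<Longrightarrow> rr q < s 6 \<Longrightarrow> B3 q = B4 q" using EQ34 by blast
lemma EB45: "s 7 < rr q \<Longrightarrow> rr q < s 8 \<Longrightarrow> B4 q = B5 q" using EQ45 by blast
lemma EC12: "s 1 < rr q \<Longrightarrow> rr q < s 2 \<Longrightarrow> C1 q = C2 q" using EQ12 by blast
lemma EC23: "s 3 < rr q \<Longrightarrow> rr q < s 4 \<Longrightarrow> C2 q = C3 q" using EQ23 by blast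
lemma EC34: "s 5 < rr q \<Longrightarrow> rr q < s 6 \<Longrightarrow> C3 q = C4 q" using EQ34 by blast
lemma EC45: "s 7 < rr q \<Longrightarrow> rr q < s 8 \<Longrightarrow> C4 q = C5 q" using EQ45 by blast

lemma zoneA: "rr q < s 2 \<Longrightarrow> Ag q = A1 q"
      "s 1 < rr q \<Longrightarrow> rr q < s 4 \<Longrightarrow> Ag q = A2 q"
      "s 3 < rr q \<Longrightarrow> rr q < s 6 \<Longrightarrow> Ag q = A3 q"
      "s 5 < rr q \<Longrightarrow> rr q < s 8 \<Longrightarrow> Ag q = A4 q"
      "s 7 < rr q \<Longrightarrow> Ag q = A5 q"
  using order EA12[of q] EA23[of q] EA34[of q] EA45[of q]
  by (auto simp: Ag_def sel_def Let_def rr_def[symmetric])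

lemma zoneB: "rr q < s 2 \<Longrightarrow> Bg q = B1 q"
      "s 1 < rr q \<Longrightarrow> rr q < s 4 \<Longrightarrow> Bg q = B2 q"
      "s 3 < rr q \<Longrightarrow> rr q < s 6 \<Longrightarrow> Bg q = B3 q"
      "s 5 < rr q \<Longrightarrow> rr q < s 8 \<Longrightarrow> Bg q = B4 q"
      "s 7 < rr q \<Longrightarrow> Bg q = B5 q"
  using order EB12[of q] EB23[of q] EB34[of q] EB45[of q]
  by (auto simp: Bg_def sel_def Let_def rr_def[symmetric])

lemma zoneC: "rr q < s 2 \<Longrightarrow> Cg q = C1 q"
      "s 1 < rr q \<Longrightarrow> rr q < s 4 \<Longrightarrow> Cg q = C2 q"
      "s 3 < rr q \<Longrightarrow> rr q < s 6 \<Longrightarrow> Cg q = C3 q"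
      "s 5 < rr q \<Longrightarrow> rr q < s 8 \<Longrightarrow> Cg q = C4 q"
      "s 7 < rr q \<Longrightarrow> Cg q = C5 q"
  using order EC12[of q] EC23[of q] EC34[of q] EC45[of q]
  by (auto simp: Cg_def sel_def Let_def rr_def[symmetric])

end

lemma dist_ctr: "dist (x, y) ctr = sqrt (rho x y)" "dist ctr (x, y) = sqrt (rho x y)"
  by (simp_all add: ctr_def dist_Pair_Pair dist_real_def rho_def power2_commute[of "1/2"] power2_abs)

context L
begin

lemma rr_cont: "continuous_on UNIV rr"
  unfolding rr_def rho_def by (auto intro!: continuous_intros)

definition "ZS1 = {q. rr q < s 2}"
definition "ZS2 = {q. s 1 < rr q} \<inter> {q. rr q < s 4}"
definition "ZS3 = {q. s 3 < rr q} \<inter> {q. rr q < s 6}"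
definition "ZS4 = {q. s 5 < rr q} \<inter> {q. rr q < s 8}"
definition "ZS5 = {q. s 7 < rr q}"

lemma ZS_open: "open ZS1" "open ZS2" "open ZS3" "open ZS4" "open ZS5"
  unfolding ZS1_def ZS2_def ZS3_def ZS4_def ZS5_def
  by (intro open_Int open_Collect_less rr_cont continuous_on_const)+

lemma cover: "q \<in> ZS1 \<or> q \<in> ZS2 \<or> q \<in> ZS3 \<or> q \<in> ZS4 \<or> q \<in> ZS5"
  using order unfolding ZS1_def ZS2_def ZS3_def ZS4_def ZS5_def by auto

lemma cos_ok: "q \<in> ZS2 \<union> ZS3 \<Longrightarrow> cos (th (h (fst q - 1/2))) \<noteq> 0"
proof -
  assume q: "q \<in> ZS2 \<union> ZS3"
  then have "rr q < s 6" using order unfolding ZS2_def ZS3_def by auto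
  then have "rho (fst q) (snd q) < 1/4" using s6_small by (simp add: rr_def)
  then have "\<bar>fst q - 1/2\<bar> < 1/2" by (rule u_small)
  then show ?thesis using cos_th_h(1) by force
qed

lemma sm_glob:
  assumes "q \<in> ZS1 \<or> q \<in> ZS2 \<or> q \<in> ZS3 \<or> q \<in> ZS4 \<or> q \<in> ZS5"
  shows "\<exists>V. open V \<and> q \<in> V \<and> Ag \<in> sm V \<and> Bg \<in> sm V \<and> Cg \<in> sm V"
  using assms
proof (elim disjE)
  assume "q \<in> ZS1"
  moreover have "Ag \<in> sm ZS1" by (rule sm.cong[OF sm_Z1(1)]) (auto simp: ZS1_def zoneA)
  moreover have "Bg \<in> sm ZS1" by (rule sm.cong[OF sm_Z1(2)]) (auto simp: ZS1_def zoneB)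
  moreover have "Cg \<in> sm ZS1" by (rule sm.cong[OF sm_Z1(3)]) (auto simp: ZS1_def zoneC)
  ultimately show ?thesis using ZS_open by blast
next
  assume "q \<in> ZS2"
  have Z: "A2 \<in> sm ZS2 \<and> B2 \<in> sm ZS2 \<and> C2 \<in> sm ZS2" by (rule sm_Z2) (use cos_ok in auto)
  have "Ag \<in> sm ZS2" by (rule sm.cong[OF conjunct1[OF Z]]) (auto simp: ZS2_def zoneA)
  moreover have "Bg \<in> sm ZS2" by (rule sm.cong[OF conjunct1[OF conjunct2[OF Z]]]) (auto simp: ZS2_def zoneB)
  moreover have "Cg \<in> sm ZS2" by (rule sm.cong[OF conjunct2[OF conjunct2[OF Z]]]) (auto simp: ZS2_def zoneC)
  ultimately show ?thesis using ZS_open \<open>q \<in> ZS2\<close> by blast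
next
  assume "q \<in> ZS3"
  have Z: "A3 \<in> sm ZS3 \<and> B3 \<in> sm ZS3 \<and> C3 \<in> sm ZS3" by (rule sm_Z3) (use cos_ok in auto)
  have "Ag \<in> sm ZS3" by (rule sm.cong[OF conjunct1[OF Z]]) (auto simp: ZS3_def zoneA)
  moreover have "Bg \<in> sm ZS3" by (rule sm.cong[OF conjunct1[OF conjunct2[OF Z]]]) (auto simp: ZS3_def zoneB)
  moreover have "Cg \<in> sm ZS3" by (rule sm.cong[OF conjunct2[OF conjunct2[OF Z]]]) (auto simp: ZS3_def zoneC)
  ultimately show ?thesis using ZS_open \<open>q \<in> ZS3\<close> by blast
next
  assume "q \<in> ZS4"
  have Z: "A4 \<in> sm ZS4 \<and> B4 \<in> sm ZS4 \<and> C4 \<in> sm ZS4" by (rule sm_Z4)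
  have "Ag \<in> sm ZS4" by (rule sm.cong[OF conjunct1[OF Z]]) (auto simp: ZS4_def zoneA)
  moreover have "Bg \<in> sm ZS4" by (rule sm.cong[OF conjunct1[OF conjunct2[OF Z]]]) (auto simp: ZS4_def zoneB)
  moreover have "Cg \<in> sm ZS4" by (rule sm.cong[OF conjunct2[OF conjunct2[OF Z]]]) (auto simp: ZS4_def zoneC)
  ultimately show ?thesis using ZS_open \<open>q \<in> ZS4\<close> by blast
next
  assume "q \<in> ZS5"
  have Z: "A5 \<in> sm ZS5 \<and> B5 \<in> sm ZS5 \<and> C5 \<in> sm ZS5" by (rule sm_Z5)
  have "Ag \<in> sm ZS5" by (rule sm.cong[OF conjunct1[OF Z]]) (auto simp: ZS5_def zoneA)
  moreover have "Bg \<in> sm ZS5" by (rule sm.cong[OF conjunct1[OF conjunct2[OF Z]]]) (auto simp: ZS5_def zoneB)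
  moreover have "Cg \<in> sm ZS5" by (rule sm.cong[OF conjunct2[OF conjunct2[OF Z]]]) (auto simp: ZS5_def zoneC)
  ultimately show ?thesis using ZS_open \<open>q \<in> ZS5\<close> by blast
qed

lemma smooth_g: "open U \<Longrightarrow> smooth_on U Ag \<and> smooth_on U Bg \<and> smooth_on U Cg"
proof -
  assume U: "open U"
  have ex: "\<exists>V. open V \<and> q \<in> V \<and> Ag \<in> sm V \<and> Bg \<in> sm V \<and> Cg \<in> sm V" for q
    by (rule sm_glob[OF cover])
  have "smooth_on U Ag" by (rule smooth_local[OF U]) (use ex in blast)
  moreover have "smooth_on U Bg" by (rule smooth_local[OF U]) (use ex in blast)
  moreover have "smooth_on U Cg" by (rule smooth_local[OF U]) (use ex in blast)
  ultimately show ?thesis by blast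
qed

lemma Qg_pos:
  assumes "rr (x, y) < 1/4"
  shows "0 < contact_coeff (Ag, Bg, Cg) (x, y)"
proof -
  have u: "\<bar>x - 1/2\<bar> < 1/2" using assms u_small by (simp add: rr_def)
  show ?thesis
    using cover[of "(x, y)"]
  proof (elim disjE)
    assume z: "(x, y) \<in> ZS1"
    have "contact_coeff (Ag, Bg, Cg) (x, y) = contact_coeff (A1, B1, C1) (x, y)"
      by (rule contact_local[OF ZS_open(1) z]) (simp add: ZS1_def zoneA(1) zoneB(1) zoneC(1))
    then show ?thesis using Q1v[of x y] by simp
  next
    assume z: "(x, y) \<in> ZS2"
    have "contact_coeff (Ag, Bg, Cg) (x, y) = contact_coeff (A2, B2, C2) (x, y)"
      by (rule contact_local[OF ZS_open(2) z]) (simp add: ZS2_def zoneA(2) zoneB(2) zoneC(2))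
    then show ?thesis using Q2pos[OF u, of y] by simp
  next
    assume z: "(x, y) \<in> ZS3"
    have "contact_coeff (Ag, Bg, Cg) (x, y) = contact_coeff (A3, B3, C3) (x, y)"
      by (rule contact_local[OF ZS_open(3) z]) (simp add: ZS3_def zoneA(3) zoneB(3) zoneC(3))
    then show ?thesis using Q3pos[OF u, of y] by simp
  next
    assume z: "(x, y) \<in> ZS4"
    have "contact_coeff (Ag, Bg, Cg) (x, y) = contact_coeff (A4, B4, C4) (x, y)"
      by (rule contact_local[OF ZS_open(4) z]) (simp add: ZS4_def zoneA(4) zoneB(4) zoneC(4))
    then show ?thesis using Q4pos[of x y] by simp
  next
    assume z: "(x, y) \<in> ZS5"
    have "contact_coeff (Ag, Bg, Cg) (x, y) = contact_coeff (A5, B5, C5) (x, y)"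
      by (rule contact_local[OF ZS_open(5) z]) (simp add: ZS5_def zoneA(5) zoneB(5) zoneC(5))
    then show ?thesis using Q5pos[of x y] by simp
  qed
qed

end

context L
begin

definition "PP r phi = (1/2 + r * cos phi, 1/2 + r * sin phi)"
definition "hh1 = (\<lambda>r phi. Cg (PP r phi))"
definition "hh2 = (\<lambda>r phi. r * (Bg (PP r phi) * cos phi - Ag (PP r phi) * sin phi))"
definition "hh3 = (\<lambda>r phi. Ag (PP r phi) * cos phi + Bg (PP r phi) * sin phi)"

lemma center_vals: "Ag (1/2, 1/2) = 0" "Bg (1/2, 1/2) = 0"
proof -
  have z: "rr (1/2, 1/2) < s 2" using a_pos[of 2] by (simp add: rr_def rho_def s_def)
  have "cutf r0 (a 1) 0 = 0" using a_mono[of 0 1] a0 r0_gt by (intro cutf_0) auto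
  then show "Ag (1/2, 1/2) = 0" "Bg (1/2, 1/2) = 0"
    using zoneA(1)[OF z] zoneB(1)[OF z] by (simp_all add: A1_def B1_def Dd_def rho_def)
qed

lemma pf: "polar_form hh1 hh2 hh3 = (Ag, Bg, Cg)"
proof -
  have main: "fst (polar_form hh1 hh2 hh3) (x, y) = Ag (x, y) \<and>
      fst (snd (polar_form hh1 hh2 hh3)) (x, y) = Bg (x, y) \<and>
      snd (snd (polar_form hh1 hh2 hh3)) (x, y) = Cg (x, y)" for x y
  proof (cases "x = 1/2 \<and> y = 1/2")
    case True
    then have x: "x = 1/2" and y: "y = 1/2" by auto
    show ?thesis unfolding x y using center_vals
      by (simp add: polar_form_def hh1_def hh2_def hh3_def PP_def dist_ctr rho_def Let_def)
  next
    case False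
    define u where "u = x - 1/2"
    define v where "v = y - 1/2"
    define r where "r = sqrt (u^2 + v^2)"
    define z where "z = Complex u v"
    have z0: "z \<noteq> 0" using False by (auto simp: z_def u_def v_def complex_eq_iff)
    have rz: "cmod z = r" by (simp add: z_def r_def complex_norm)
    have r0': "r \<noteq> 0" using z0 rz by auto
    have rsq: "r^2 = u^2 + v^2" by (simp add: r_def)
    have cs: "cos (Arg z) = u / r" "sin (Arg z) = v / r"
    proof -
      have "cis (Arg z) = sgn z" by (rule cis_Arg[OF z0])
      then have "Re (cis (Arg z)) = Re z / cmod z" "Im (cis (Arg z)) = Im z / cmod z"
        by (simp_all add: sgn_div_norm divide_inverse mult.commute)
      then show "cos (Arg z) = u / r" "sin (Arg z) = v / r" using rz by (simp_all add: z_def)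
    qed
    have P: "PP r (Arg z) = (x, y)" using r0' by (simp add: PP_def cs u_def v_def)
    have d: "dist (x, y) ctr = r" by (simp add: dist_ctr rho_def r_def u_def v_def)
    have A: "fst (polar_form hh1 hh2 hh3) (x, y) =
       hh2 r (Arg z) * (- v) / r^2 + hh3 r (Arg z) * u / r"
      by (simp add: polar_form_def Let_def d z_def u_def v_def)
    have B: "fst (snd (polar_form hh1 hh2 hh3)) (x, y) =
       hh2 r (Arg z) * u / r^2 + hh3 r (Arg z) * v / r"
      by (simp add: polar_form_def Let_def d z_def u_def v_def)
    have C: "snd (snd (polar_form hh1 hh2 hh3)) (x, y) = hh1 r (Arg z)"
      by (simp add: polar_form_def Let_def d z_def u_def v_def)
    define \<alpha> where "\<alpha> = Ag (x, y)"
    define \<beta> where "\<beta> = Bg (x, y)"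
    have h2: "hh2 r (Arg z) = r * (\<beta> * (u / r) - \<alpha> * (v / r))" by (simp add: hh2_def P cs \<alpha>_def \<beta>_def)
    have h3: "hh3 r (Arg z) = \<alpha> * (u / r) + \<beta> * (v / r)" by (simp add: hh3_def P cs \<alpha>_def \<beta>_def)
    have "r * (\<beta> * (u / r) - \<alpha> * (v / r)) * (- v) / r^2 + (\<alpha> * (u / r) + \<beta> * (v / r)) * u / r
        = \<alpha> * (u^2 + v^2) / r^2"
      using r0' by (simp add: field_simps power2_eq_square)
    then have eA: "r * (\<beta> * (u / r) - \<alpha> * (v / r)) * (- v) / r^2 + (\<alpha> * (u / r) + \<beta> * (v / r)) * u / r = \<alpha>"
      using r0' by (simp add: rsq[symmetric])
    have "r * (\<beta> * (u / r) - \<alpha> * (v / r)) * u / r^2 + (\<alpha> * (u / r) + \<beta> * (v / r)) * v / r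
        = \<beta> * (u^2 + v^2) / r^2"
      using r0' by (simp add: field_simps power2_eq_square)
    then have eB: "r * (\<beta> * (u / r) - \<alpha> * (v / r)) * u / r^2 + (\<alpha> * (u / r) + \<beta> * (v / r)) * v / r = \<beta>"
      using r0' by (simp add: rsq[symmetric])
    show ?thesis
      using A B C eA eB by (simp add: h2 h3 \<alpha>_def \<beta>_def hh1_def P)
  qed
  show ?thesis
  proof (rule prod_eqI)
    show "fst (polar_form hh1 hh2 hh3) = fst (Ag, Bg, Cg)" using main by (auto simp: fun_eq_iff)
    show "snd (polar_form hh1 hh2 hh3) = snd (Ag, Bg, Cg)"
      using main by (auto simp: fun_eq_iff intro!: prod_eqI)
  qed
qed

lemma std_ok: "rr (x, y) \<le> r0^2 \<Longrightarrow> form_eq_at (Ag, Bg, Cg) std_form (x, y)"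
proof -
  assume r: "rr (x, y) \<le> r0^2"
  then have z: "rr (x, y) < s 2" using order by simp
  have o: "r0 < a 1" "0 \<le> r0" using a_mono[of 0 1] a0 r0_gt by auto
  have "cutf r0 (a 1) (rho x y) = 0" using r o by (intro cutf_0) (auto simp: rr_def)
  moreover have "cutd r0 (a 1) (rho x y) = 0" using r o by (intro cutd_0) (auto simp: rr_def)
  ultimately show ?thesis using zoneA(1)[OF z] zoneB(1)[OF z] zoneC(1)[OF z]
    by (simp add: form_eq_at_def std_form_def A1_def B1_def C1_def Dd_def Dd1_def)
qed

lemma bnd_ok: "s 9 < rr (x, y) \<Longrightarrow> form_eq_at (Ag, Bg, Cg) alpha0 (x, y)"
proof -
  assume r: "s 9 < rr (x, y)"
  then have z: "s 7 < rr (x, y)" using order by simp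
  have o: "a 8 < a 9" "0 \<le> a 8" using a_mono[of 8 9] a_nonneg[of 8] by auto
  have "cutf (a 8) (a 9) (rho x y) = 1" using r o by (intro cutf_1) (auto simp: rr_def s_def)
  moreover have "cutd (a 8) (a 9) (rho x y) = 0" using r o by (intro cutd_1) (auto simp: rr_def s_def)
  moreover have "T5 (x, y) = 2 * pi * x" using calculation by (simp add: T5_def F_def th_def)
  ultimately show ?thesis using zoneA(5)[OF z] zoneB(5)[OF z] zoneC(5)[OF z]
    by (simp add: form_eq_at_def alpha0_def A5_def B5_def C5_def M5_def P5_def F_def F1_def)
qed

end

theorem lemma7:
  fixes r0 \<epsilon> :: real
  assumes "1/4 < r0" and "r0 < 1/2" and "\<epsilon> > 0" and "r0 + \<epsilon> < 1/2"
  shows "\<exists>h1 h2 h3 :: real \<Rightarrow> real \<Rightarrow> real.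
           let \<beta> = polar_form h1 h2 h3 in
             is_contact_on (disk (r0 + \<epsilon>)) \<beta> \<and>
             (\<forall>p\<in>cdisk r0. form_eq_at \<beta> std_form p) \<and>
             (\<exists>\<delta>>0. \<forall>p\<in>disk (r0 + \<epsilon>). dist p ctr > r0 + \<epsilon> - \<delta> \<longrightarrow> form_eq_at \<beta> alpha0 p)"
proof -
  interpret L r0 \<epsilon> using assms by unfold_locales auto
  have dsq: "dist p ctr = sqrt (rr p)" "dist ctr p = sqrt (rr p)" for p
    by (cases p; simp add: dist_ctr rr_def)+
  have "is_contact_on (disk (r0 + \<epsilon>)) (Ag, Bg, Cg)"
    unfolding is_contact_on_def smooth_form_on_def
  proof (intro conjI ballI)
    show "case (Ag, Bg, Cg) of (A, B, C) \<Rightarrow> smooth_on (disk (r0 + \<epsilon>)) A \<and> smooth_on (disk (r0 + \<epsilon>)) B \<and> smooth_on (disk (r0 + \<epsilon>)) C"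
      using smooth_g[of "disk (r0 + \<epsilon>)"] by (simp add: disk_def)
  next
    fix p assume p: "p \<in> disk (r0 + \<epsilon>)"
    obtain x y where pe: "p = (x, y)" by (cases p)
    have "sqrt (rr p) < 1/2" using p assms(4) dsq[of p] by (simp add: disk_def)
    then have "sqrt (rr p) < sqrt (1/4)" by (simp add: real_sqrt_divide)
    then have "rr p < 1/4" by (simp only: real_sqrt_less_iff)
    then show "contact_coeff (Ag, Bg, Cg) p \<noteq> 0" using Qg_pos[of x y] pe by simp
  qed
  moreover have "\<forall>p\<in>cdisk r0. form_eq_at (Ag, Bg, Cg) std_form p"
  proof
    fix p assume p: "p \<in> cdisk r0"
    obtain x y where pe: "p = (x, y)" by (cases p)
    have "sqrt (rr p) \<le> r0" using p dsq[of p] by (simp add: cdisk_def)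
    then have "sqrt (rr p) \<le> sqrt (r0^2)" using assms(1) by simp
    then have "rr p \<le> r0^2" by (simp only: real_sqrt_le_iff)
    then show "form_eq_at (Ag, Bg, Cg) std_form p" using std_ok pe by simp
  qed
  moreover have "\<forall>p\<in>disk (r0 + \<epsilon>). dist p ctr > r0 + \<epsilon> - e \<longrightarrow> form_eq_at (Ag, Bg, Cg) alpha0 p"
  proof (intro ballI impI)
    fix p assume p: "r0 + \<epsilon> - e < dist p ctr"
    obtain x y where pe: "p = (x, y)" by (cases p)
    have a9: "a 9 = r0 + \<epsilon> - e" by (simp add: a_def e_def)
    have "a 9 < sqrt (rr p)" using p dsq[of p] a9 by simp
    then have "sqrt ((a 9)^2) < sqrt (rr p)" using a_nonneg[of 9] by simp
    then have "s 9 < rr p" by (simp only: real_sqrt_less_iff s_def)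
    then show "form_eq_at (Ag, Bg, Cg) alpha0 p" using bnd_ok pe by simp
  qed
  moreover have "e > 0" using assms(3) by (simp add: e_def)
  ultimately show ?thesis
    by (intro exI[of _ hh1] exI[of _ hh2] exI[of _ hh3]) (auto simp: pf Let_def)
qed

end
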